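(* Let $G$ be a cubical $\omega$-category with connections. For each $n\ge0$, the set $\Phi_n(G_n)$ is an $\omega$-category with the following structure: for $0\le p<n$, $d^\alpha_px=\varepsilon_1^{n-p}(\partial^\alpha_1)^{n-p}x$ and $x\#_py=x\circ_{n-p}y$ where defined; for $p\ge n$, $d^\alpha_px=x$ and the only composites are $x\#_px=x$. Moreover $\varepsilon_1$ maps $\Phi_n(G_n)$ into $\Phi_{n+1}(G_{n+1})$, giving a sequence of $\omega$-categories and homomorphisms $\Phi_0(G_0)\xrightarrow{\varepsilon_1}\Phi_1(G_1)\xrightarrow{\varepsilon_1}\Phi_2(G_2)\to\cdots$.
   Context: An $\omega$-category is a set $X$ with unary operations $d^-_p,d^+_p$ and partial binary operations $\#_p$ ($p\ge0$) such that: $x\#_py$ is defined iff $d^+_px=d^-_py$; $d^\beta_qd^\alpha_px=d^\beta_qx$ for $q<p$ and $=d^\alpha_px$ for $q\ge p$; if $x\#_py$ is defined then $d^-_p(x\#_py)=d^-_px$, $d^+_p(x\#_py)=d^+_py$, $d^\beta_q(x\#_py)=d^\beta_qx\#_pd^\beta_qy$ ($q\ne p$); $d^-_px\#_px=x\#_pd^+_px=x$; $\#_p$ is associative; for $p\ne q$, $(x\#_py)\#_q(x'\#_py')=(x\#_qx')\#_p(y\#_qy')$ whenever both sides are defined; each $x$ has a dimension $\dim x$ with $d^\alpha_px=x$ iff $p\ge\dim x$. Homomorphisms preserve all operations. A cubical $\omega$-category with connections $G$ consists of sets $G_n$ ($n\ge0$), face maps $\partial^\alpha_i:G_n\to G_{n-1}$,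 degeneracies $\varepsilon_i:G_{n-1}\to G_n$, connections $\Gamma^\alpha_i:G_n\to G_{n+1}$ ($1\le i\le n$, $\alpha=\pm$) and partial compositions $\circ_j$ on $G_n$ ($1\le j\le n$, $a\circ_jb$ defined iff $\partial^+_ja=\partial^-_jb$) satisfying: $\partial^\alpha_i\partial^\beta_j=\partial^\beta_{j-1}\partial^\alpha_i$ ($i<j$), $\varepsilon_i\varepsilon_j=\varepsilon_{j+1}\varepsilon_i$ ($i\le j$), $\partial^\alpha_i\varepsilon_j=\varepsilon_{j-1}\partial^\alpha_i$ ($i<j$), $\varepsilon_j\partial^\alpha_{i-1}$ ($i>j$), $\mathrm{id}$ ($i=j$); $\Gamma^\alpha_i\Gamma^\beta_j=\Gamma^\beta_{j+1}\Gamma^\alpha_i$ ($i<j$), $\Gamma^\alpha_i\Gamma^\alpha_i=\Gamma^\alpha_{i+1}\Gamma^\alpha_i$, $\Gamma^\alpha_i\varepsilon_j=\varepsilon_{j+1}\Gamma^\alpha_i$ ($i<j$), $\varepsilon_j\Gamma^\alpha_{i-1}$ ($i>j$), $\Gamma^\alpha_j\varepsilon_j=\varepsilon_{j+1}\varepsilon_j$, $\partial^\alpha_i\Gamma^\beta_j=\Gamma^\beta_{j-1}\partial^\alpha_i$ ($i<j$), $\Gamma^\beta_j\partial^\alpha_{i-1}$ ($i>j+1$), $\partial^\alpha_j\Gamma^\alpha_j=\partial^\alpha_{j+1}\Gamma^\alpha_j=\mathrm{id}$, $\partial^\alpha_j\Gamma^{-\alpha}_j=\partial^\alpha_{j+1}\Gamma^{-\alpha}_j=\varepsilon_j\partial^\alpha_j$;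 $\partial^-_j(a\circ_jb)=\partial^-_ja$, $\partial^+_j(a\circ_jb)=\partial^+_jb$, $\partial^\alpha_i(a\circ_jb)=\partial^\alpha_ia\circ_{j-1}\partial^\alpha_ib$ ($i<j$), $\partial^\alpha_ia\circ_j\partial^\alpha_ib$ ($i>j$); interchange $(a\circ_ib)\circ_j(c\circ_id)=(a\circ_jc)\circ_i(b\circ_jd)$ for $i\ne j$; $\varepsilon_i(a\circ_jb)=\varepsilon_ia\circ_{j+1}\varepsilon_ib$ ($i\le j$), $\varepsilon_ia\circ_j\varepsilon_ib$ ($i>j$); $\Gamma^\alpha_i(a\circ_jb)=\Gamma^\alpha_ia\circ_{j+1}\Gamma^\alpha_ib$ ($i<j$), $\Gamma^\alpha_ia\circ_j\Gamma^\alpha_ib$ ($i>j$); $\Gamma^+_j(a\circ_jb)=(\Gamma^+_ja\circ_j\varepsilon_ja)\circ_{j+1}(\varepsilon_{j+1}a\circ_j\Gamma^+_jb)$, $\Gamma^-_j(a\circ_jb)=(\Gamma^-_ja\circ_j\varepsilon_{j+1}b)\circ_{j+1}(\varepsilon_jb\circ_j\Gamma^-_jb)$; each $\circ_j$ is a category structure with identities $\varepsilon_jy$; $\Gamma^+_ix\circ_i\Gamma^-_ix=\varepsilon_{i+1}x$, $\Gamma^+_ix\circ_{i+1}\Gamma^-_ix=\varepsilon_ix$. Folding operations on $G_n$: $\psi_ix=\Gamma^+_i\partial^-_{i+1}x\circ_{i+1}x\circ_{i+1}\Gamma^-_i\partial^+_{i+1}x$ ($1\le i\le n-1$), $\Psi_r=\psi_{r-1}\cdots\psi_1$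 ($1\le r\le n$), $\Phi_n=\Psi_1\Psi_2\cdots\Psi_n$ (so $\Phi_0=\Phi_1=\mathrm{id}$). *)

theory Defs
  imports Main
begin

text \<open>Signs \<alpha> = +/- are encoded as True/False.
  All cubical operations are indexed by the dimension n of their SOURCE:
  fc n i \<alpha> : G n -> G (n-1)   (face \<partial>^\<alpha>_i, 1 \<le> i \<le> n)
  dg n i     : G n -> G (n+1)   (degeneracy \<epsilon>_i, 1 \<le> i \<le> n+1)
  cn n i \<alpha> : G n -> G (n+1)   (connection \<Gamma>^\<alpha>_i, 1 \<le> i \<le> n)
  cmp n j    : G n x G n -> G n (composition \<circ>_j, 1 \<le> j \<le> n),
  meaningful only when fc n j True a = fc n j False b.\<close>

definition omega_cat ::
  "'a set \<Rightarrow> (nat \<Rightarrow> bool \<Rightarrow> 'a \<Rightarrow> 'a) \<Rightarrow> (nat \<Rightarrow> 'a \<Rightarrow> 'a \<Rightarrow> 'a) \<Rightarrow> bool" where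
  "omega_cat X d c \<longleftrightarrow>
    (\<forall>x\<in>X. \<forall>p \<alpha>. d p \<alpha> x \<in> X) \<and>
    (\<forall>x\<in>X. \<forall>y\<in>X. \<forall>p. d p True x = d p False y \<longrightarrow> c p x y \<in> X) \<and>
    (\<forall>x\<in>X. \<forall>p q \<alpha> \<beta>. d q \<beta> (d p \<alpha> x) = (if q < p then d q \<beta> x else d p \<alpha> x)) \<and>
    (\<forall>x\<in>X. \<forall>y\<in>X. \<forall>p. d p True x = d p False y \<longrightarrow>
        d p False (c p x y) = d p False x \<and> d p True (c p x y) = d p True y \<and>
        (\<forall>q \<beta>. q \<noteq> p \<longrightarrow> d q \<beta> (c p x y) = c p (d q \<beta> x) (d q \<beta> y))) \<and>
    (\<forall>x\<in>X. \<forall>p. c p (d p False x) x = x \<and> c p x (d p True x) = x) \<and>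
    (\<forall>x\<in>X. \<forall>y\<in>X. \<forall>z\<in>X. \<forall>p. d p True x = d p False y \<longrightarrow> d p True y = d p False z \<longrightarrow>
        c p (c p x y) z = c p x (c p y z)) \<and>
    (\<forall>x\<in>X. \<forall>y\<in>X. \<forall>x'\<in>X. \<forall>y'\<in>X. \<forall>p q. p \<noteq> q \<longrightarrow>
        d p True x = d p False y \<longrightarrow> d p True x' = d p False y' \<longrightarrow>
        d q True (c p x y) = d q False (c p x' y') \<longrightarrow>
        d q True x = d q False x' \<longrightarrow> d q True y = d q False y' \<longrightarrow>
        d p True (c q x x') = d p False (c q y y') \<longrightarrow>
        c q (c p x y) (c p x' y') = c p (c q x x') (c q y y')) \<and>
    (\<forall>x\<in>X. \<exists>m::nat. \<forall>p \<alpha>. d p \<alpha> x = x \<longleftrightarrow> m \<le> p)"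

definition omega_hom ::
  "'a set \<Rightarrow> (nat \<Rightarrow> bool \<Rightarrow> 'a \<Rightarrow> 'a) \<Rightarrow> (nat \<Rightarrow> 'a \<Rightarrow> 'a \<Rightarrow> 'a) \<Rightarrow>
   'b set \<Rightarrow> (nat \<Rightarrow> bool \<Rightarrow> 'b \<Rightarrow> 'b) \<Rightarrow> (nat \<Rightarrow> 'b \<Rightarrow> 'b \<Rightarrow> 'b) \<Rightarrow> ('a \<Rightarrow> 'b) \<Rightarrow> bool" where
  "omega_hom X d c Y d' c' f \<longleftrightarrow>
    (\<forall>x\<in>X. f x \<in> Y) \<and>
    (\<forall>x\<in>X. \<forall>p \<alpha>. f (d p \<alpha> x) = d' p \<alpha> (f x)) \<and>
    (\<forall>x\<in>X. \<forall>y\<in>X. \<forall>p. d p True x = d p False y \<longrightarrow> f (c p x y) = c' p (f x) (f y))"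

definition cubical_omega_cat_conn ::
  "(nat \<Rightarrow> 'a set) \<Rightarrow> (nat \<Rightarrow> nat \<Rightarrow> bool \<Rightarrow> 'a \<Rightarrow> 'a) \<Rightarrow> (nat \<Rightarrow> nat \<Rightarrow> 'a \<Rightarrow> 'a) \<Rightarrow>
   (nat \<Rightarrow> nat \<Rightarrow> bool \<Rightarrow> 'a \<Rightarrow> 'a) \<Rightarrow> (nat \<Rightarrow> nat \<Rightarrow> 'a \<Rightarrow> 'a \<Rightarrow> 'a) \<Rightarrow> bool" where
  "cubical_omega_cat_conn G fc dg cn cmp \<longleftrightarrow>
    \<comment> \<open>closure\<close>
    (\<forall>n. \<forall>x\<in>G n. \<forall>i \<alpha>. 1 \<le> i \<and> i \<le> n \<longrightarrow> fc n i \<alpha> x \<in> G (n - 1)) \<and>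
    (\<forall>n. \<forall>x\<in>G n. \<forall>i. 1 \<le> i \<and> i \<le> n + 1 \<longrightarrow> dg n i x \<in> G (Suc n)) \<and>
    (\<forall>n. \<forall>x\<in>G n. \<forall>i \<alpha>. 1 \<le> i \<and> i \<le> n \<longrightarrow> cn n i \<alpha> x \<in> G (Suc n)) \<and>
    (\<forall>n. \<forall>a\<in>G n. \<forall>b\<in>G n. \<forall>j. 1 \<le> j \<and> j \<le> n \<longrightarrow> fc n j True a = fc n j False b \<longrightarrow>
        cmp n j a b \<in> G n) \<and>
    \<comment> \<open>cubical identities\<close>
    (\<forall>n. \<forall>x\<in>G n. \<forall>i j \<alpha> \<beta>. 1 \<le> i \<and> i < j \<and> j \<le> n \<longrightarrow>
        fc (n - 1) i \<alpha> (fc n j \<beta> x) = fc (n - 1) (j - 1) \<beta> (fc n i \<alpha> x)) \<and>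
    (\<forall>n. \<forall>x\<in>G n. \<forall>i j. 1 \<le> i \<and> i \<le> j \<and> j \<le> n + 1 \<longrightarrow>
        dg (Suc n) i (dg n j x) = dg (Suc n) (j + 1) (dg n i x)) \<and>
    (\<forall>n. \<forall>x\<in>G n. \<forall>i j \<alpha>. 1 \<le> i \<and> i \<le> n + 1 \<and> 1 \<le> j \<and> j \<le> n + 1 \<longrightarrow>
        fc (Suc n) i \<alpha> (dg n j x) =
          (if i < j then dg (n - 1) (j - 1) (fc n i \<alpha> x)
           else if j < i then dg (n - 1) j (fc n (i - 1) \<alpha> x)
           else x)) \<and>
    \<comment> \<open>connections\<close>
    (\<forall>n. \<forall>x\<in>G n. \<forall>i j \<alpha> \<beta>. 1 \<le> i \<and> i < j \<and> j \<le> n \<longrightarrow>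
        cn (Suc n) i \<alpha> (cn n j \<beta> x) = cn (Suc n) (j + 1) \<beta> (cn n i \<alpha> x)) \<and>
    (\<forall>n. \<forall>x\<in>G n. \<forall>i \<alpha>. 1 \<le> i \<and> i \<le> n \<longrightarrow>
        cn (Suc n) i \<alpha> (cn n i \<alpha> x) = cn (Suc n) (i + 1) \<alpha> (cn n i \<alpha> x)) \<and>
    (\<forall>n. \<forall>x\<in>G n. \<forall>i j \<alpha>. 1 \<le> i \<and> i \<le> n + 1 \<and> 1 \<le> j \<and> j \<le> n + 1 \<longrightarrow>
        cn (Suc n) i \<alpha> (dg n j x) =
          (if i < j then dg (Suc n) (j + 1) (cn n i \<alpha> x)
           else if j < i then dg (Suc n) j (cn n (i - 1) \<alpha> x)
           else dg (Suc n) (j + 1) (dg n j x))) \<and>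
    (\<forall>n. \<forall>x\<in>G n. \<forall>i j \<alpha> \<beta>. 1 \<le> j \<and> j \<le> n \<and> 1 \<le> i \<and> i \<le> n + 1 \<longrightarrow>
        fc (Suc n) i \<alpha> (cn n j \<beta> x) =
          (if i < j then cn (n - 1) (j - 1) \<beta> (fc n i \<alpha> x)
           else if j + 1 < i then cn (n - 1) j \<beta> (fc n (i - 1) \<alpha> x)
           else if \<alpha> = \<beta> then x
           else dg (n - 1) j (fc n j \<alpha> x))) \<and>
    \<comment> \<open>faces of composites\<close>
    (\<forall>n. \<forall>a\<in>G n. \<forall>b\<in>G n. \<forall>j. 1 \<le> j \<and> j \<le> n \<longrightarrow> fc n j True a = fc n j False b \<longrightarrow>
        fc n j False (cmp n j a b) = fc n j False a \<and>
        fc n j True (cmp n j a b) = fc n j True b \<and>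
        (\<forall>i \<alpha>. 1 \<le> i \<and> i < j \<longrightarrow>
            fc n i \<alpha> (cmp n j a b) = cmp (n - 1) (j - 1) (fc n i \<alpha> a) (fc n i \<alpha> b)) \<and>
        (\<forall>i \<alpha>. j < i \<and> i \<le> n \<longrightarrow>
            fc n i \<alpha> (cmp n j a b) = cmp (n - 1) j (fc n i \<alpha> a) (fc n i \<alpha> b))) \<and>
    \<comment> \<open>interchange, whenever both sides are defined\<close>
    (\<forall>n. \<forall>a\<in>G n. \<forall>b\<in>G n. \<forall>c\<in>G n. \<forall>e\<in>G n. \<forall>i j.
        1 \<le> i \<and> i \<le> n \<and> 1 \<le> j \<and> j \<le> n \<and> i \<noteq> j \<longrightarrow>
        fc n i True a = fc n i False b \<longrightarrow> fc n i True c = fc n i False e \<longrightarrow>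
        fc n j True (cmp n i a b) = fc n j False (cmp n i c e) \<longrightarrow>
        fc n j True a = fc n j False c \<longrightarrow> fc n j True b = fc n j False e \<longrightarrow>
        fc n i True (cmp n j a c) = fc n i False (cmp n j b e) \<longrightarrow>
        cmp n j (cmp n i a b) (cmp n i c e) = cmp n i (cmp n j a c) (cmp n j b e)) \<and>
    \<comment> \<open>degeneracies of composites\<close>
    (\<forall>n. \<forall>a\<in>G n. \<forall>b\<in>G n. \<forall>i j. 1 \<le> j \<and> j \<le> n \<and> 1 \<le> i \<and> i \<le> n + 1 \<longrightarrow>
        fc n j True a = fc n j False b \<longrightarrow>
        dg n i (cmp n j a b) =
          (if i \<le> j then cmp (Suc n) (j + 1) (dg n i a) (dg n i b)
           else cmp (Suc n) j (dg n i a) (dg n i b))) \<and>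
    \<comment> \<open>connections of composites\<close>
    (\<forall>n. \<forall>a\<in>G n. \<forall>b\<in>G n. \<forall>i j \<alpha>. 1 \<le> j \<and> j \<le> n \<and> 1 \<le> i \<and> i \<le> n \<longrightarrow>
        fc n j True a = fc n j False b \<longrightarrow>
        cn n i \<alpha> (cmp n j a b) =
          (if i < j then cmp (Suc n) (j + 1) (cn n i \<alpha> a) (cn n i \<alpha> b)
           else if j < i then cmp (Suc n) j (cn n i \<alpha> a) (cn n i \<alpha> b)
           else if \<alpha> then
             cmp (Suc n) (j + 1) (cmp (Suc n) j (cn n j True a) (dg n j a))
                                 (cmp (Suc n) j (dg n (j + 1) a) (cn n j True b))
           else
             cmp (Suc n) (j + 1) (cmp (Suc n) j (cn n j False a) (dg n (j + 1) b))
                                 (cmp (Suc n) j (dg n j b) (cn n j False b)))) \<and>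
    \<comment> \<open>each \<circ>_j is a category with identities \<epsilon>_j y\<close>
    (\<forall>n. \<forall>a\<in>G n. \<forall>b\<in>G n. \<forall>c\<in>G n. \<forall>j. 1 \<le> j \<and> j \<le> n \<longrightarrow>
        fc n j True a = fc n j False b \<longrightarrow> fc n j True b = fc n j False c \<longrightarrow>
        cmp n j (cmp n j a b) c = cmp n j a (cmp n j b c)) \<and>
    (\<forall>n. \<forall>x\<in>G n. \<forall>j. 1 \<le> j \<and> j \<le> n \<longrightarrow>
        cmp n j (dg (n - 1) j (fc n j False x)) x = x \<and>
        cmp n j x (dg (n - 1) j (fc n j True x)) = x) \<and>
    \<comment> \<open>connection identities\<close>
    (\<forall>n. \<forall>x\<in>G n. \<forall>i. 1 \<le> i \<and> i \<le> n \<longrightarrow>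
        cmp (Suc n) i (cn n i True x) (cn n i False x) = dg n (i + 1) x \<and>
        cmp (Suc n) (i + 1) (cn n i True x) (cn n i False x) = dg n i x)"

definition psi :: "(nat \<Rightarrow> nat \<Rightarrow> bool \<Rightarrow> 'a \<Rightarrow> 'a) \<Rightarrow> (nat \<Rightarrow> nat \<Rightarrow> bool \<Rightarrow> 'a \<Rightarrow> 'a) \<Rightarrow>
   (nat \<Rightarrow> nat \<Rightarrow> 'a \<Rightarrow> 'a \<Rightarrow> 'a) \<Rightarrow> nat \<Rightarrow> nat \<Rightarrow> 'a \<Rightarrow> 'a" where
  "psi fc cn cmp n i x =
     cmp n (i + 1) (cmp n (i + 1) (cn (n - 1) i True (fc n (i + 1) False x)) x)
                   (cn (n - 1) i False (fc n (i + 1) True x))"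

text \<open>\<Psi>_r = \<psi>_{r-1} \<circ> ... \<circ> \<psi>_1 (\<psi>_1 applied first); \<Psi>_1 = id.\<close>
fun Psi :: "(nat \<Rightarrow> nat \<Rightarrow> bool \<Rightarrow> 'a \<Rightarrow> 'a) \<Rightarrow> (nat \<Rightarrow> nat \<Rightarrow> bool \<Rightarrow> 'a \<Rightarrow> 'a) \<Rightarrow>
   (nat \<Rightarrow> nat \<Rightarrow> 'a \<Rightarrow> 'a \<Rightarrow> 'a) \<Rightarrow> nat \<Rightarrow> nat \<Rightarrow> 'a \<Rightarrow> 'a" where
  "Psi fc cn cmp n 0 x = x"
| "Psi fc cn cmp n (Suc 0) x = x"
| "Psi fc cn cmp n (Suc (Suc r)) x = psi fc cn cmp n (Suc r) (Psi fc cn cmp n (Suc r) x)"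

text \<open>Phi_aux n k = \<Psi>_1 \<circ> \<Psi>_2 \<circ> ... \<circ> \<Psi>_k on G n; \<Phi>_n = Phi_aux n n.\<close>
fun Phi_aux :: "(nat \<Rightarrow> nat \<Rightarrow> bool \<Rightarrow> 'a \<Rightarrow> 'a) \<Rightarrow> (nat \<Rightarrow> nat \<Rightarrow> bool \<Rightarrow> 'a \<Rightarrow> 'a) \<Rightarrow>
   (nat \<Rightarrow> nat \<Rightarrow> 'a \<Rightarrow> 'a \<Rightarrow> 'a) \<Rightarrow> nat \<Rightarrow> nat \<Rightarrow> 'a \<Rightarrow> 'a" where
  "Phi_aux fc cn cmp n 0 x = x"
| "Phi_aux fc cn cmp n (Suc k) x = Phi_aux fc cn cmp n k (Psi fc cn cmp n (Suc k) x)"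

definition Phi :: "(nat \<Rightarrow> nat \<Rightarrow> bool \<Rightarrow> 'a \<Rightarrow> 'a) \<Rightarrow> (nat \<Rightarrow> nat \<Rightarrow> bool \<Rightarrow> 'a \<Rightarrow> 'a) \<Rightarrow>
   (nat \<Rightarrow> nat \<Rightarrow> 'a \<Rightarrow> 'a \<Rightarrow> 'a) \<Rightarrow> nat \<Rightarrow> 'a \<Rightarrow> 'a" where
  "Phi fc cn cmp n = Phi_aux fc cn cmp n n"

fun faces1 :: "(nat \<Rightarrow> nat \<Rightarrow> bool \<Rightarrow> 'a \<Rightarrow> 'a) \<Rightarrow> nat \<Rightarrow> nat \<Rightarrow> bool \<Rightarrow> 'a \<Rightarrow> 'a" where
  "faces1 fc n 0 \<alpha> x = x"
| "faces1 fc n (Suc k) \<alpha> x = faces1 fc (n - 1) k \<alpha> (fc n 1 \<alpha> x)"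

fun degs1 :: "(nat \<Rightarrow> nat \<Rightarrow> 'a \<Rightarrow> 'a) \<Rightarrow> nat \<Rightarrow> nat \<Rightarrow> 'a \<Rightarrow> 'a" where
  "degs1 dg p 0 x = x"
| "degs1 dg p (Suc k) x = dg (p + k) 1 (degs1 dg p k x)"

definition Phi_d :: "(nat \<Rightarrow> nat \<Rightarrow> bool \<Rightarrow> 'a \<Rightarrow> 'a) \<Rightarrow> (nat \<Rightarrow> nat \<Rightarrow> 'a \<Rightarrow> 'a) \<Rightarrow>
   nat \<Rightarrow> nat \<Rightarrow> bool \<Rightarrow> 'a \<Rightarrow> 'a" where
  "Phi_d fc dg n p \<alpha> x = (if p < n then degs1 dg p (n - p) (faces1 fc n (n - p) \<alpha> x) else x)"

text \<open>For p \<ge> n, x #_p y is defined only when x = y, and then equals x.\<close>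
definition Phi_c :: "(nat \<Rightarrow> nat \<Rightarrow> 'a \<Rightarrow> 'a \<Rightarrow> 'a) \<Rightarrow> nat \<Rightarrow> nat \<Rightarrow> 'a \<Rightarrow> 'a \<Rightarrow> 'a" where
  "Phi_c cmp n p x y = (if p < n then cmp n (n - p) x y else x)"

end

theory Submission
  imports Defs
begin

locale cub =
  fixes G :: "nat \<Rightarrow> 'a set"
    and fc :: "nat \<Rightarrow> nat \<Rightarrow> bool \<Rightarrow> 'a \<Rightarrow> 'a"
    and dg :: "nat \<Rightarrow> nat \<Rightarrow> 'a \<Rightarrow> 'a"
    and cn :: "nat \<Rightarrow> nat \<Rightarrow> bool \<Rightarrow> 'a \<Rightarrow> 'a"
    and cmp :: "nat \<Rightarrow> nat \<Rightarrow> 'a \<Rightarrow> 'a \<Rightarrow> 'a"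
  assumes ax: "cubical_omega_cat_conn G fc dg cn cmp"
begin

lemmas AX = ax[unfolded cubical_omega_cat_conn_def]
lemmas c1 = AX[THEN conjunct1]
lemmas c2 = AX[THEN conjunct2, THEN conjunct1]
lemmas c3 = AX[THEN conjunct2, THEN conjunct2, THEN conjunct1]
lemmas c4 = AX[THEN conjunct2, THEN conjunct2, THEN conjunct2, THEN conjunct1]
lemmas c5 = AX[THEN conjunct2, THEN conjunct2, THEN conjunct2, THEN conjunct2, THEN conjunct1]
lemmas c6 = AX[THEN conjunct2, THEN conjunct2, THEN conjunct2, THEN conjunct2, THEN conjunct2, THEN conjunct1]
lemmas c7 = AX[THEN conjunct2, THEN conjunct2, THEN conjunct2, THEN conjunct2, THEN conjunct2, THEN conjunct2, THEN conjunct1]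
lemmas c8 = AX[THEN conjunct2, THEN conjunct2, THEN conjunct2, THEN conjunct2, THEN conjunct2, THEN conjunct2, THEN conjunct2, THEN conjunct1]
lemmas c9 = AX[THEN conjunct2, THEN conjunct2, THEN conjunct2, THEN conjunct2, THEN conjunct2, THEN conjunct2, THEN conjunct2, THEN conjunct2, THEN conjunct1]
lemmas c10 = AX[THEN conjunct2, THEN conjunct2, THEN conjunct2, THEN conjunct2, THEN conjunct2, THEN conjunct2, THEN conjunct2, THEN conjunct2, THEN conjunct2, THEN conjunct1]
lemmas c11 = AX[THEN conjunct2, THEN conjunct2, THEN conjunct2, THEN conjunct2, THEN conjunct2, THEN conjunct2, THEN conjunct2, THEN conjunct2, THEN conjunct2, THEN conjunct2, THEN conjunct1]
lemmas c12 = AX[THEN conjunct2, THEN conjunct2, THEN conjunct2, THEN conjunct2, THEN conjunct2, THEN conjunct2, THEN conjunct2, THEN conjunct2, THEN conjunct2, THEN conjunct2, THEN conjunct2, THEN conjunct1]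
lemmas c13 = AX[THEN conjunct2, THEN conjunct2, THEN conjunct2, THEN conjunct2, THEN conjunct2, THEN conjunct2, THEN conjunct2, THEN conjunct2, THEN conjunct2, THEN conjunct2, THEN conjunct2, THEN conjunct2, THEN conjunct1]
lemmas c14 = AX[THEN conjunct2, THEN conjunct2, THEN conjunct2, THEN conjunct2, THEN conjunct2, THEN conjunct2, THEN conjunct2, THEN conjunct2, THEN conjunct2, THEN conjunct2, THEN conjunct2, THEN conjunct2, THEN conjunct2, THEN conjunct1]
lemmas c15 = AX[THEN conjunct2, THEN conjunct2, THEN conjunct2, THEN conjunct2, THEN conjunct2, THEN conjunct2, THEN conjunct2, THEN conjunct2, THEN conjunct2, THEN conjunct2, THEN conjunct2, THEN conjunct2, THEN conjunct2, THEN conjunct2, THEN conjunct1]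
lemmas c16 = AX[THEN conjunct2, THEN conjunct2, THEN conjunct2, THEN conjunct2, THEN conjunct2, THEN conjunct2, THEN conjunct2, THEN conjunct2, THEN conjunct2, THEN conjunct2, THEN conjunct2, THEN conjunct2, THEN conjunct2, THEN conjunct2, THEN conjunct2, THEN conjunct1]
lemmas c17 = AX[THEN conjunct2, THEN conjunct2, THEN conjunct2, THEN conjunct2, THEN conjunct2, THEN conjunct2, THEN conjunct2, THEN conjunct2, THEN conjunct2, THEN conjunct2, THEN conjunct2, THEN conjunct2, THEN conjunct2, THEN conjunct2, THEN conjunct2, THEN conjunct2, THEN conjunct1]
lemmas c18 = AX[THEN conjunct2, THEN conjunct2, THEN conjunct2, THEN conjunct2, THEN conjunct2, THEN conjunct2, THEN conjunct2, THEN conjunct2, THEN conjunct2, THEN conjunct2, THEN conjunct2, THEN conjunct2, THEN conjunct2, THEN conjunct2, THEN conjunct2, THEN conjunct2, THEN conjunct2]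

lemma fc_G: "x \<in> G n \<Longrightarrow> 1 \<le> i \<Longrightarrow> i \<le> n \<Longrightarrow> fc n i \<alpha> x \<in> G (n - 1)"
  using c1 by blast
lemma dg_G: "x \<in> G n \<Longrightarrow> 1 \<le> i \<Longrightarrow> i \<le> n + 1 \<Longrightarrow> dg n i x \<in> G (Suc n)"
  using c2 by blast
lemma cn_G: "x \<in> G n \<Longrightarrow> 1 \<le> i \<Longrightarrow> i \<le> n \<Longrightarrow> cn n i \<alpha> x \<in> G (Suc n)"
  using c3 by blast
lemma cmp_G: "a \<in> G n \<Longrightarrow> b \<in> G n \<Longrightarrow> 1 \<le> j \<Longrightarrow> j \<le> n \<Longrightarrow> fc n j True a = fc n j False b \<Longrightarrow> cmp n j a b \<in> G n"
  using c4 by blast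
lemma fc_fc: "x \<in> G n \<Longrightarrow> 1 \<le> i \<Longrightarrow> i < j \<Longrightarrow> j \<le> n \<Longrightarrow>
        fc (n - 1) i \<alpha> (fc n j \<beta> x) = fc (n - 1) (j - 1) \<beta> (fc n i \<alpha> x)"
  using c5 by blast
lemma dg_dg: "x \<in> G n \<Longrightarrow> 1 \<le> i \<Longrightarrow> i \<le> j \<Longrightarrow> j \<le> n + 1 \<Longrightarrow>
        dg (Suc n) i (dg n j x) = dg (Suc n) (j + 1) (dg n i x)"
  using c6 by blast
lemma fc_dg_eq: "x \<in> G n \<Longrightarrow> 1 \<le> i \<Longrightarrow> i \<le> n + 1 \<Longrightarrow> fc (Suc n) i \<alpha> (dg n i x) = x"
proof -
  assume a: "x \<in> G n" "1 \<le> i" "i \<le> n + 1"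
  have "\<forall>n. \<forall>x\<in>G n. \<forall>i j \<alpha>. 1 \<le> i \<and> i \<le> n + 1 \<and> 1 \<le> j \<and> j \<le> n + 1 \<longrightarrow>
        fc (Suc n) i \<alpha> (dg n j x) =
          (if i < j then dg (n - 1) (j - 1) (fc n i \<alpha> x)
           else if j < i then dg (n - 1) j (fc n (i - 1) \<alpha> x)
           else x)" using c7 by blast
  then show ?thesis using a by auto
qed
lemma fc_dg_lt: "x \<in> G n \<Longrightarrow> 1 \<le> i \<Longrightarrow> i < j \<Longrightarrow> j \<le> n + 1 \<Longrightarrow> fc (Suc n) i \<alpha> (dg n j x) = dg (n - 1) (j - 1) (fc n i \<alpha> x)"
proof -
  assume a: "x \<in> G n" "1 \<le> i" "i < j" "j \<le> n + 1"
  have "\<forall>n. \<forall>x\<in>G n. \<forall>i j \<alpha>. 1 \<le> i \<and> i \<le> n + 1 \<and> 1 \<le> j \<and> j \<le> n + 1 \<longrightarrow>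
        fc (Suc n) i \<alpha> (dg n j x) =
          (if i < j then dg (n - 1) (j - 1) (fc n i \<alpha> x)
           else if j < i then dg (n - 1) j (fc n (i - 1) \<alpha> x)
           else x)" using c7 by blast
  then show ?thesis using a by auto
qed
lemma fc_dg_gt: "x \<in> G n \<Longrightarrow> 1 \<le> j \<Longrightarrow> j < i \<Longrightarrow> i \<le> n + 1 \<Longrightarrow> fc (Suc n) i \<alpha> (dg n j x) = dg (n - 1) j (fc n (i - 1) \<alpha> x)"
proof -
  assume a: "x \<in> G n" "1 \<le> j" "j < i" "i \<le> n + 1"
  have "\<forall>n. \<forall>x\<in>G n. \<forall>i j \<alpha>. 1 \<le> i \<and> i \<le> n + 1 \<and> 1 \<le> j \<and> j \<le> n + 1 \<longrightarrow>
        fc (Suc n) i \<alpha> (dg n j x) =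
          (if i < j then dg (n - 1) (j - 1) (fc n i \<alpha> x)
           else if j < i then dg (n - 1) j (fc n (i - 1) \<alpha> x)
           else x)" using c7 by blast
  then show ?thesis using a by auto
qed
lemma cn_dg_eq: "x \<in> G n \<Longrightarrow> 1 \<le> i \<Longrightarrow> i \<le> n + 1 \<Longrightarrow> cn (Suc n) i \<alpha> (dg n i x) = dg (Suc n) (i + 1) (dg n i x)"
proof -
  assume a: "x \<in> G n" "1 \<le> i" "i \<le> n + 1"
  have "\<forall>n. \<forall>x\<in>G n. \<forall>i j \<alpha>. 1 \<le> i \<and> i \<le> n + 1 \<and> 1 \<le> j \<and> j \<le> n + 1 \<longrightarrow>
        cn (Suc n) i \<alpha> (dg n j x) =
          (if i < j then dg (Suc n) (j + 1) (cn n i \<alpha> x)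
           else if j < i then dg (Suc n) j (cn n (i - 1) \<alpha> x)
           else dg (Suc n) (j + 1) (dg n j x))" using c10 by blast
  then show ?thesis using a by auto
qed
lemma fc_cn: "x \<in> G n \<Longrightarrow> 1 \<le> j \<Longrightarrow> j \<le> n \<Longrightarrow> 1 \<le> i \<Longrightarrow> i \<le> n + 1 \<Longrightarrow>
        fc (Suc n) i \<alpha> (cn n j \<beta> x) =
          (if i < j then cn (n - 1) (j - 1) \<beta> (fc n i \<alpha> x)
           else if j + 1 < i then cn (n - 1) j \<beta> (fc n (i - 1) \<alpha> x)
           else if \<alpha> = \<beta> then x
           else dg (n - 1) j (fc n j \<alpha> x))"
  using c11 by blast
lemma fc_cmp: "a \<in> G n \<Longrightarrow> b \<in> G n \<Longrightarrow> 1 \<le> j \<Longrightarrow> j \<le> n \<Longrightarrow> fc n j True a = fc n j False b \<Longrightarrow>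
        fc n j False (cmp n j a b) = fc n j False a \<and>
        fc n j True (cmp n j a b) = fc n j True b \<and>
        (\<forall>i \<alpha>. 1 \<le> i \<and> i < j \<longrightarrow>
            fc n i \<alpha> (cmp n j a b) = cmp (n - 1) (j - 1) (fc n i \<alpha> a) (fc n i \<alpha> b)) \<and>
        (\<forall>i \<alpha>. j < i \<and> i \<le> n \<longrightarrow>
            fc n i \<alpha> (cmp n j a b) = cmp (n - 1) j (fc n i \<alpha> a) (fc n i \<alpha> b))"
  using c12 by blast
lemma interchange: "a\<in>G n \<Longrightarrow> b\<in>G n \<Longrightarrow> c\<in>G n \<Longrightarrow> e\<in>G n \<Longrightarrow>
        1 \<le> i \<and> i \<le> n \<and> 1 \<le> j \<and> j \<le> n \<and> i \<noteq> j \<Longrightarrow>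
        fc n i True a = fc n i False b \<Longrightarrow> fc n i True c = fc n i False e \<Longrightarrow>
        fc n j True (cmp n i a b) = fc n j False (cmp n i c e) \<Longrightarrow>
        fc n j True a = fc n j False c \<Longrightarrow> fc n j True b = fc n j False e \<Longrightarrow>
        fc n i True (cmp n j a c) = fc n i False (cmp n j b e) \<Longrightarrow>
        cmp n j (cmp n i a b) (cmp n i c e) = cmp n i (cmp n j a c) (cmp n j b e)"
  using c13 by blast
lemma dg_cmp: "a\<in>G n \<Longrightarrow> b\<in>G n \<Longrightarrow> 1 \<le> j \<Longrightarrow> j \<le> n \<Longrightarrow> 1 \<le> i \<Longrightarrow> i \<le> j \<Longrightarrow>
        fc n j True a = fc n j False b \<Longrightarrow>
        dg n i (cmp n j a b) = cmp (Suc n) (j + 1) (dg n i a) (dg n i b)"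
proof -
  assume a: "a\<in>G n" "b\<in>G n" "1 \<le> j" "j \<le> n" "1 \<le> i" "i \<le> j" "fc n j True a = fc n j False b"
  have "\<forall>n. \<forall>a\<in>G n. \<forall>b\<in>G n. \<forall>i j. 1 \<le> j \<and> j \<le> n \<and> 1 \<le> i \<and> i \<le> n + 1 \<longrightarrow>
        fc n j True a = fc n j False b \<longrightarrow>
        dg n i (cmp n j a b) =
          (if i \<le> j then cmp (Suc n) (j + 1) (dg n i a) (dg n i b)
           else cmp (Suc n) j (dg n i a) (dg n i b))" using c14 by blast
  then show ?thesis using a by auto
qed
lemma assoc: "a\<in>G n \<Longrightarrow> b\<in>G n \<Longrightarrow> c\<in>G n \<Longrightarrow> 1 \<le> j \<Longrightarrow> j \<le> n \<Longrightarrow>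
        fc n j True a = fc n j False b \<Longrightarrow> fc n j True b = fc n j False c \<Longrightarrow>
        cmp n j (cmp n j a b) c = cmp n j a (cmp n j b c)"
  using c16 by blast
lemma ident: "x\<in>G n \<Longrightarrow> 1 \<le> j \<Longrightarrow> j \<le> n \<Longrightarrow>
        cmp n j (dg (n - 1) j (fc n j False x)) x = x \<and>
        cmp n j x (dg (n - 1) j (fc n j True x)) = x"
  using c17 by blast

end

context cub begin

lemma faces1_G: "x \<in> G n \<Longrightarrow> k \<le> n \<Longrightarrow> faces1 fc n k \<alpha> x \<in> G (n - k)"
proof (induction k arbitrary: n x)
  case 0 then show ?case by simp
next
  case (Suc k)
  then have "fc n 1 \<alpha> x \<in> G (n - 1)" using fc_G by simp
  then have "faces1 fc (n - 1) k \<alpha> (fc n 1 \<alpha> x) \<in> G (n - 1 - k)" using Suc.IH[of "fc n 1 \<alpha> x" "n - 1"] Suc.prems by simp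
  then show ?case by simp
qed

lemma faces1_add: "faces1 fc n (a + b) \<alpha> x = faces1 fc (n - a) b \<alpha> (faces1 fc n a \<alpha> x)"
  by (induction a arbitrary: n x) simp_all

lemma faces1_Suc': "faces1 fc n (Suc k) \<alpha> x = fc (n - k) 1 \<alpha> (faces1 fc n k \<alpha> x)"
  using faces1_add[of n k 1 \<alpha> x] by simp

lemma degs1_G: "z \<in> G p \<Longrightarrow> degs1 dg p k z \<in> G (p + k)"
  by (induction k) (auto intro: dg_G)

lemma degs1_dgk: "z \<in> G p \<Longrightarrow> 1 \<le> i \<Longrightarrow> i \<le> k + 1 \<Longrightarrow> degs1 dg p (Suc k) z = dg (p + k) i (degs1 dg p k z)"
proof (induction k arbitrary: i)
  case 0 then show ?case by simp
next
  case (Suc k)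
  show ?case
  proof (cases "i = 1")
    case True then show ?thesis by simp
  next
    case False
    then obtain i' where i'0: "i = Suc i'" using Suc.prems by (cases i) auto
    then have i': "i = Suc i'" "1 \<le> i'" "i' \<le> k + 1" using Suc.prems False by auto
    have "degs1 dg p (Suc (Suc k)) z = dg (p + Suc k) 1 (dg (p + k) i' (degs1 dg p k z))"
      using Suc.IH[OF Suc.prems(1) i'(2,3)] by simp
    also have "\<dots> = dg (p + Suc k) i (dg (p + k) 1 (degs1 dg p k z))"
      using dg_dg[of "degs1 dg p k z" "p + k" 1 i'] degs1_G[OF Suc.prems(1)] i' by simp
    finally show ?thesis by simp
  qed
qed

lemma fc_degs1_low: "z \<in> G p \<Longrightarrow> 1 \<le> j \<Longrightarrow> j \<le> k \<Longrightarrow> fc (p + k) j \<alpha> (degs1 dg p k z) = degs1 dg p (k - 1) z"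
proof -
  assume a: "z \<in> G p" "1 \<le> j" "j \<le> k"
  then obtain k' where k: "k = Suc k'" by (cases k) auto
  have "fc (p + k) j \<alpha> (degs1 dg p k z) = fc (Suc (p + k')) j \<alpha> (dg (p + k') j (degs1 dg p k' z))"
    using degs1_dgk[OF a(1) a(2), of k'] a k by simp
  also have "\<dots> = degs1 dg p k' z" using fc_dg_eq degs1_G a k by simp
  finally show ?thesis using k by simp
qed

lemma fc_degs1_high: "z \<in> G p \<Longrightarrow> k < j \<Longrightarrow> j \<le> p + k \<Longrightarrow>
   fc (p + k) j \<alpha> (degs1 dg p k z) = degs1 dg (p - 1) k (fc p (j - k) \<alpha> z)"
proof (induction k arbitrary: j)
  case 0 then show ?case by simp
next
  case (Suc k)
  have "fc (p + Suc k) j \<alpha> (degs1 dg p (Suc k) z) = fc (Suc (p + k)) j \<alpha> (dg (p + k) 1 (degs1 dg p k z))" by simp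
  also have "\<dots> = dg (p + k - 1) 1 (fc (p + k) (j - 1) \<alpha> (degs1 dg p k z))"
    using fc_dg_gt[of "degs1 dg p k z" "p + k" 1 j] degs1_G[OF Suc.prems(1)] Suc.prems by simp
  also have "\<dots> = dg (p + k - 1) 1 (degs1 dg (p - 1) k (fc p (j - Suc k) \<alpha> z))"
    using Suc.IH[of "j - 1"] Suc.prems by simp
  also have "\<dots> = degs1 dg (p - 1) (Suc k) (fc p (j - Suc k) \<alpha> z)"
    using Suc.prems by simp
  finally show ?case .
qed

lemma faces1_degs1: "z \<in> G p \<Longrightarrow> m \<le> k \<Longrightarrow> faces1 fc (p + k) m \<alpha> (degs1 dg p k z) = degs1 dg p (k - m) z"
proof (induction m)
  case 0 then show ?case by simp
next
  case (Suc m)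
  have "faces1 fc (p + k) (Suc m) \<alpha> (degs1 dg p k z) = fc (p + k - m) 1 \<alpha> (faces1 fc (p + k) m \<alpha> (degs1 dg p k z))"
    by (rule faces1_Suc')
  also have "\<dots> = fc (p + (k - m)) 1 \<alpha> (degs1 dg p (k - m) z)"
    using Suc.IH Suc.prems by simp
  also have "\<dots> = degs1 dg p (k - Suc m) z" using fc_degs1_low[OF Suc.prems(1), of 1 "k - m"] Suc.prems by simp
  finally show ?case .
qed

lemma degs1_inj: "z \<in> G p \<Longrightarrow> z' \<in> G p \<Longrightarrow> degs1 dg p k z = degs1 dg p k z' \<Longrightarrow> z = z'"
proof -
  assume a: "z \<in> G p" "z' \<in> G p" "degs1 dg p k z = degs1 dg p k z'"
  have "z = faces1 fc (p + k) k True (degs1 dg p k z)" using faces1_degs1[of z p k k True] a by simp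
  also have "\<dots> = faces1 fc (p + k) k True (degs1 dg p k z')" using a(3) by (rule arg_cong)
  also have "\<dots> = z'" using faces1_degs1[of z' p k k True] a by simp
  finally show ?thesis .
qed

lemma faces1_fc: "x \<in> G n \<Longrightarrow> m < j \<Longrightarrow> j \<le> n \<Longrightarrow>
   faces1 fc (n - 1) m \<beta> (fc n j \<alpha> x) = fc (n - m) (j - m) \<alpha> (faces1 fc n m \<beta> x)"
proof (induction m arbitrary: n x j)
  case 0 then show ?case by simp
next
  case (Suc m)
  have x1: "fc n 1 \<beta> x \<in> G (n - 1)" using fc_G Suc.prems by simp
  have "faces1 fc (n - 1) (Suc m) \<beta> (fc n j \<alpha> x) = faces1 fc (n - 1 - 1) m \<beta> (fc (n - 1) 1 \<beta> (fc n j \<alpha> x))"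
    by simp
  also have "\<dots> = faces1 fc (n - 1 - 1) m \<beta> (fc (n - 1) (j - 1) \<alpha> (fc n 1 \<beta> x))"
    using fc_fc[of x n 1 j \<beta> \<alpha>] Suc.prems by simp
  also have "\<dots> = fc (n - 1 - m) (j - 1 - m) \<alpha> (faces1 fc (n - 1) m \<beta> (fc n 1 \<beta> x))"
    using Suc.IH[OF x1, of "j - 1"] Suc.prems by simp
  also have "\<dots> = fc (n - Suc m) (j - Suc m) \<alpha> (faces1 fc n (Suc m) \<beta> x)" by simp
  finally show ?case .
qed

lemma degs1_idem: "z \<in> G p \<Longrightarrow> 1 \<le> i \<Longrightarrow> i \<le> k \<Longrightarrow> cmp (p + k) i (degs1 dg p k z) (degs1 dg p k z) = degs1 dg p k z"
proof -
  assume a: "z \<in> G p" "1 \<le> i" "i \<le> k"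
  then obtain k' where k: "k = Suc k'" by (cases k) auto
  define w where "w = degs1 dg p k' z"
  have w: "w \<in> G (p + k')" using degs1_G a w_def by simp
  have X: "degs1 dg p k z = dg (p + k') i w" using degs1_dgk[OF a(1) a(2), of k'] a k w_def by simp
  have "fc (Suc (p + k')) i False (dg (p + k') i w) = w" using fc_dg_eq w a k by simp
  then have "cmp (Suc (p + k')) i (dg (p + k') i w) (dg (p + k') i w) = dg (p + k') i w"
    using ident[of "dg (p + k') i w" "Suc (p + k')" i] dg_G[OF w, of i] a k by simp
  then show ?thesis using X k by simp
qed

lemma degs1_cmp: "a \<in> G p \<Longrightarrow> b \<in> G p \<Longrightarrow> 1 \<le> i \<Longrightarrow> i \<le> p \<Longrightarrow> fc p i True a = fc p i False b \<Longrightarrow>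
  fc (p + k) (i + k) True (degs1 dg p k a) = fc (p + k) (i + k) False (degs1 dg p k b) \<and>
  cmp (p + k) (i + k) (degs1 dg p k a) (degs1 dg p k b) = degs1 dg p k (cmp p i a b)"
proof (induction k)
  case 0 then show ?case by simp
next
  case (Suc k)
  have c1: "fc (p + Suc k) (i + Suc k) True (degs1 dg p (Suc k) a) = fc (p + Suc k) (i + Suc k) False (degs1 dg p (Suc k) b)"
    using fc_degs1_high[of a p "Suc k" "i + Suc k" True] fc_degs1_high[of b p "Suc k" "i + Suc k" False] Suc.prems by simp
  have "degs1 dg p (Suc k) (cmp p i a b) = dg (p + k) 1 (cmp (p + k) (i + k) (degs1 dg p k a) (degs1 dg p k b))"
    using Suc by simp
  also have "\<dots> = cmp (Suc (p + k)) (i + k + 1) (degs1 dg p (Suc k) a) (degs1 dg p (Suc k) b)"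
    using dg_cmp[of "degs1 dg p k a" "p + k" "degs1 dg p k b" "i + k" 1] Suc degs1_G by simp
  finally show ?case using c1 by simp
qed


lemma fc_degs1_low': "z \<in> G p \<Longrightarrow> N = p + k \<Longrightarrow> 1 \<le> j \<Longrightarrow> j \<le> k \<Longrightarrow> fc N j \<alpha> (degs1 dg p k z) = degs1 dg p (k - 1) z"
  using fc_degs1_low by simp
lemma fc_degs1_high': "z \<in> G p \<Longrightarrow> N = p + k \<Longrightarrow> k < j \<Longrightarrow> j \<le> N \<Longrightarrow> p' = p - 1 \<Longrightarrow> j' = j - k \<Longrightarrow>
   fc N j \<alpha> (degs1 dg p k z) = degs1 dg p' k (fc p j' \<alpha> z)"
  using fc_degs1_high by simp
lemma degs1_G': "z \<in> G p \<Longrightarrow> N = p + k \<Longrightarrow> degs1 dg p k z \<in> G N"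
  using degs1_G by simp
lemma degs1_Suc_eq: "N = p + k \<Longrightarrow> dg N 1 (degs1 dg p k z) = degs1 dg p (Suc k) z"
  by simp
lemma degs1_idem': "z \<in> G p \<Longrightarrow> N = p + k \<Longrightarrow> 1 \<le> i \<Longrightarrow> i \<le> k \<Longrightarrow> cmp N i (degs1 dg p k z) (degs1 dg p k z) = degs1 dg p k z"
  using degs1_idem by simp
lemma degs1_cmp': "a \<in> G p \<Longrightarrow> b \<in> G p \<Longrightarrow> 1 \<le> i \<Longrightarrow> i \<le> p \<Longrightarrow> fc p i True a = fc p i False b \<Longrightarrow>
  N = p + k \<Longrightarrow> I = i + k \<Longrightarrow>
  cmp N I (degs1 dg p k a) (degs1 dg p k b) = degs1 dg p k (cmp p i a b)"
  using degs1_cmp by simp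
lemma faces1_degs1': "z \<in> G p \<Longrightarrow> N = p + k \<Longrightarrow> m \<le> k \<Longrightarrow> faces1 fc N m \<alpha> (degs1 dg p k z) = degs1 dg p (k - m) z"
  using faces1_degs1 by simp
lemma faces1_G': "x \<in> G n \<Longrightarrow> k \<le> n \<Longrightarrow> N = n - k \<Longrightarrow> faces1 fc n k \<alpha> x \<in> G N"
  using faces1_G by simp
lemma fc_G': "x \<in> G n \<Longrightarrow> 1 \<le> i \<Longrightarrow> i \<le> n \<Longrightarrow> N = n - 1 \<Longrightarrow> fc n i \<alpha> x \<in> G N"
  using fc_G by simp

end

context cub begin

definition gam :: "nat \<Rightarrow> 'a \<Rightarrow> bool" where
  "gam n x \<longleftrightarrow> x \<in> G n \<and> (\<forall>j \<alpha>. 2 \<le> j \<and> j \<le> n \<longrightarrow> (\<exists>z\<in>G (n - j). fc n j \<alpha> x = degs1 dg (n - j) (j - 1) z))"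

lemma gamI: "x \<in> G n \<Longrightarrow> (\<And>j \<alpha>. 2 \<le> j \<Longrightarrow> j \<le> n \<Longrightarrow> \<exists>z\<in>G (n - j). fc n j \<alpha> x = degs1 dg (n - j) (j - 1) z) \<Longrightarrow> gam n x"
  unfolding gam_def by blast
lemma gamG: "gam n x \<Longrightarrow> x \<in> G n" unfolding gam_def by blast
lemma gamD: "gam n x \<Longrightarrow> 2 \<le> j \<Longrightarrow> j \<le> n \<Longrightarrow> \<exists>z\<in>G (n - j). fc n j \<alpha> x = degs1 dg (n - j) (j - 1) z"
  unfolding gam_def by blast

lemma gam_fc1: "gam n x \<Longrightarrow> 1 \<le> n \<Longrightarrow> gam (n - 1) (fc n 1 \<alpha> x)"
proof (rule gamI)
  assume g: "gam n x" and n: "1 \<le> n"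
  show "fc n 1 \<alpha> x \<in> G (n - 1)" using fc_G gamG[OF g] n by simp
  fix j \<beta> assume j: "2 \<le> j" "j \<le> n - 1"
  have ex: "\<exists>z\<in>G (n - (j + 1)). fc n (j + 1) \<beta> x = degs1 dg (n - (j + 1)) (j + 1 - 1) z"
    by (rule gamD[OF g]) (use j in arith)+
  then obtain z where z: "z \<in> G (n - (j + 1))" "fc n (j + 1) \<beta> x = degs1 dg (n - (j + 1)) j z"
    by auto
  have "fc (n - 1) j \<beta> (fc n 1 \<alpha> x) = fc (n - 1) 1 \<alpha> (fc n (j + 1) \<beta> x)"
    using fc_fc[of x n 1 "j + 1" \<alpha> \<beta>] gamG[OF g] j by simp
  also have "\<dots> = degs1 dg (n - (j + 1)) (j - 1) z"
    using z fc_degs1_low'[of z "n - (j + 1)" "n - 1" j 1 \<alpha>] j by simp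
  finally show "\<exists>z\<in>G (n - 1 - j). fc (n - 1) j \<beta> (fc n 1 \<alpha> x) = degs1 dg (n - 1 - j) (j - 1) z"
    using z by (intro bexI[of _ z]) (simp_all add: diff_diff_add)
qed

lemma gam_faces1: "gam n x \<Longrightarrow> k \<le> n \<Longrightarrow> gam (n - k) (faces1 fc n k \<alpha> x)"
proof (induction k arbitrary: n x)
  case 0 then show ?case by simp
next
  case (Suc k)
  have "gam (n - 1) (fc n 1 \<alpha> x)" using gam_fc1 Suc.prems by simp
  then have "gam (n - 1 - k) (faces1 fc (n - 1) k \<alpha> (fc n 1 \<alpha> x))" using Suc.IH[of "n - 1" "fc n 1 \<alpha> x"] Suc.prems by simp
  then show ?case by simp
qed

lemma gam_dg1: "gam n x \<Longrightarrow> gam (Suc n) (dg n 1 x)"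
proof (rule gamI)
  assume g: "gam n x"
  have x: "x \<in> G n" using gamG[OF g] .
  show "dg n 1 x \<in> G (Suc n)" using dg_G[OF x] by simp
  fix j \<beta> assume j: "2 \<le> j" "j \<le> Suc n"
  have e: "fc (Suc n) j \<beta> (dg n 1 x) = dg (n - 1) 1 (fc n (j - 1) \<beta> x)"
    using fc_dg_gt[OF x, of 1 j \<beta>] j by simp
  show "\<exists>z\<in>G (Suc n - j). fc (Suc n) j \<beta> (dg n 1 x) = degs1 dg (Suc n - j) (j - 1) z"
  proof (cases "j = 2")
    case True
    then show ?thesis using e fc_G[OF x, of 1 \<beta>] j by (intro bexI[of _ "fc n 1 \<beta> x"]) simp_all
  next
    case False
    have ex: "\<exists>z\<in>G (n - (j - 1)). fc n (j - 1) \<beta> x = degs1 dg (n - (j - 1)) (j - 1 - 1) z"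
      by (rule gamD[OF g]) (use j False in arith)+
    then obtain z where z: "z \<in> G (n - (j - 1))" "fc n (j - 1) \<beta> x = degs1 dg (n - (j - 1)) (j - 1 - 1) z"
      by blast
    have "dg (n - 1) 1 (degs1 dg (n - (j - 1)) (j - 1 - 1) z) = degs1 dg (n - (j - 1)) (Suc (j - 1 - 1)) z"
      by (rule degs1_Suc_eq) (use j False in arith)
    then show ?thesis using e z j False
      by (intro bexI[of _ z]) (simp_all add: Suc_diff_Suc)
  qed
qed

lemma gam_degs1: "gam p z \<Longrightarrow> gam (p + k) (degs1 dg p k z)"
proof (induction k)
  case 0 then show ?case by simp
next
  case (Suc k)
  have "gam (Suc (p + k)) (dg (p + k) 1 (degs1 dg p k z))" using gam_dg1[OF Suc.IH[OF Suc.prems]] .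
  then show ?case by simp
qed

lemma gam_fc_eq: "gam n x \<Longrightarrow> 1 \<le> k \<Longrightarrow> k \<le> n \<Longrightarrow> fc n k \<alpha> x = degs1 dg (n - k) (k - 1) (faces1 fc n k \<alpha> x)"
proof -
  assume g: "gam n x" and k: "1 \<le> k" "k \<le> n"
  have x: "x \<in> G n" using gamG[OF g] .
  show ?thesis
  proof (cases "k = 1")
    case True then show ?thesis by simp
  next
    case False
    then obtain z where z: "z \<in> G (n - k)" "fc n k \<alpha> x = degs1 dg (n - k) (k - 1) z"
      using gamD[OF g, of k \<alpha>] k by auto
    have "faces1 fc (n - 1) (k - 1) \<alpha> (fc n k \<alpha> x) = fc (n - (k - 1)) (k - (k - 1)) \<alpha> (faces1 fc n (k - 1) \<alpha> x)"
      using faces1_fc[OF x, of "k - 1" k \<alpha> \<alpha>] k by simp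
    also have "\<dots> = faces1 fc n (Suc (k - 1)) \<alpha> x"
      using faces1_Suc'[of n "k - 1" \<alpha> x] k by simp
    finally have A: "faces1 fc (n - 1) (k - 1) \<alpha> (fc n k \<alpha> x) = faces1 fc n k \<alpha> x" using k by simp
    have "faces1 fc (n - 1) (k - 1) \<alpha> (fc n k \<alpha> x) = z"
      using z faces1_degs1'[of z "n - k" "n - 1" "k - 1" "k - 1" \<alpha>] k by simp
    then show ?thesis using A z by simp
  qed
qed

lemma sign_indep: "gam n x \<Longrightarrow> 2 \<le> n \<Longrightarrow> fc (n - 1) 1 \<beta> (fc n 1 \<alpha> x) = fc (n - 1) 1 \<beta> (fc n 1 \<beta> x)"
proof -
  assume g: "gam n x" and n: "2 \<le> n"
  have x: "x \<in> G n" using gamG[OF g] .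
  obtain z where z: "z \<in> G (n - 2)" "fc n 2 \<beta> x = degs1 dg (n - 2) 1 z"
    using gamD[OF g, of 2 \<beta>] n by auto
  have d: "fc n 2 \<beta> x = dg (n - 2) 1 z" using z by simp
  have N: "Suc (n - 2) = n - 1" using n by arith
  have "fc (n - 1) 1 \<beta> (fc n 1 \<alpha> x) = fc (n - 1) 1 \<alpha> (fc n 2 \<beta> x)"
    using fc_fc[OF x, of 1 2 \<alpha> \<beta>] n by simp
  also have "\<dots> = z" using d fc_dg_eq[OF z(1), of 1 \<alpha>] N by simp
  also have "\<dots> = fc (n - 1) 1 \<beta> (fc n 2 \<beta> x)" using d fc_dg_eq[OF z(1), of 1 \<beta>] N by simp
  also have "\<dots> = fc (n - 1) 1 \<beta> (fc n 1 \<beta> x)"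
    using fc_fc[OF x, of 1 2 \<beta> \<beta>] n by simp
  finally show ?thesis .
qed

lemma faces1_mix: "gam n x \<Longrightarrow> 1 \<le> m \<Longrightarrow> m + l \<le> n \<Longrightarrow>
   faces1 fc (n - l) m \<beta> (faces1 fc n l \<alpha> x) = faces1 fc n (m + l) \<beta> x"
proof (induction l arbitrary: n x)
  case 0 then show ?case by simp
next
  case (Suc l)
  have g1: "gam (n - 1) (fc n 1 \<alpha> x)" using gam_fc1 Suc.prems by simp
  obtain r where r: "m + l = Suc r" using Suc.prems by (cases "m + l") auto
  have "faces1 fc (n - Suc l) m \<beta> (faces1 fc n (Suc l) \<alpha> x) = faces1 fc (n - 1 - l) m \<beta> (faces1 fc (n - 1) l \<alpha> (fc n 1 \<alpha> x))"
    by simp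
  also have "\<dots> = faces1 fc (n - 1) (m + l) \<beta> (fc n 1 \<alpha> x)"
    using Suc.IH[OF g1] Suc.prems by simp
  also have "\<dots> = faces1 fc (n - 1 - 1) r \<beta> (fc (n - 1) 1 \<beta> (fc n 1 \<alpha> x))"
    using r by simp
  also have "\<dots> = faces1 fc (n - 1 - 1) r \<beta> (fc (n - 1) 1 \<beta> (fc n 1 \<beta> x))"
    using sign_indep[OF Suc.prems(1), of \<beta> \<alpha>] Suc.prems by simp
  also have "\<dots> = faces1 fc n (m + Suc l) \<beta> x"
    using r by simp
  finally show ?case .
qed

lemma comp_of_d: "gam n x \<Longrightarrow> gam n y \<Longrightarrow> 1 \<le> k \<Longrightarrow> k \<le> n \<Longrightarrow>
   degs1 dg (n - k) k (faces1 fc n k True x) = degs1 dg (n - k) k (faces1 fc n k False y) \<Longrightarrow>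
   fc n k True x = fc n k False y"
proof -
  assume gx: "gam n x" and gy: "gam n y" and k: "1 \<le> k" "k \<le> n"
    and e: "degs1 dg (n - k) k (faces1 fc n k True x) = degs1 dg (n - k) k (faces1 fc n k False y)"
  have "faces1 fc n k True x = faces1 fc n k False y"
    using degs1_inj[OF faces1_G[OF gamG[OF gx] k(2)] faces1_G[OF gamG[OF gy] k(2)] e] .
  then show ?thesis using gam_fc_eq[OF gx k, of True] gam_fc_eq[OF gy k, of False] by simp
qed

lemma d_of_comp: "gam n x \<Longrightarrow> gam n y \<Longrightarrow> 1 \<le> k \<Longrightarrow> k \<le> n \<Longrightarrow> fc n k True x = fc n k False y \<Longrightarrow>
   faces1 fc n k True x = faces1 fc n k False y"
proof -
  assume gx: "gam n x" and gy: "gam n y" and k: "1 \<le> k" "k \<le> n" and e: "fc n k True x = fc n k False y"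
  have "degs1 dg (n - k) (k - 1) (faces1 fc n k True x) = degs1 dg (n - k) (k - 1) (faces1 fc n k False y)"
    using gam_fc_eq[OF gx k, of True] gam_fc_eq[OF gy k, of False] e by simp
  then show ?thesis using degs1_inj faces1_G gamG gx gy k by blast
qed

end

context cub begin

lemma gam_cmp: "gam n x \<Longrightarrow> gam n y \<Longrightarrow> 1 \<le> k \<Longrightarrow> k \<le> n \<Longrightarrow> fc n k True x = fc n k False y \<Longrightarrow>
  gam n (cmp n k x y)"
proof (rule gamI)
  assume gx: "gam n x" and gy: "gam n y" and k: "1 \<le> k" "k \<le> n" and e: "fc n k True x = fc n k False y"
  have x: "x \<in> G n" and y: "y \<in> G n" using gamG gx gy by auto
  note FC = fc_cmp[OF x y k e]
  show "cmp n k x y \<in> G n" using cmp_G[OF x y k e] .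
  fix j \<beta> assume j: "2 \<le> j" "j \<le> n"
  show "\<exists>z\<in>G (n - j). fc n j \<beta> (cmp n k x y) = degs1 dg (n - j) (j - 1) z"
  proof (cases "j = k")
    case True
    show ?thesis
    proof (cases \<beta>)
      case True
      then show ?thesis using FC gamD[OF gy j, of True] \<open>j = k\<close> by simp
    next
      case False
      then show ?thesis using FC gamD[OF gx j, of False] \<open>j = k\<close> by simp
    qed
  next
    case False
    obtain a where a: "a \<in> G (n - j)" "fc n j \<beta> x = degs1 dg (n - j) (j - 1) a"
      using gamD[OF gx j, of \<beta>] by blast
    obtain b where b: "b \<in> G (n - j)" "fc n j \<beta> y = degs1 dg (n - j) (j - 1) b"
      using gamD[OF gy j, of \<beta>] by blast
    show ?thesis
    proof (cases "j < k")
      case True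
      have f1: "fc n j \<beta> (cmp n k x y) = cmp (n - 1) (k - 1) (fc n j \<beta> x) (fc n j \<beta> y)"
        using FC True j by auto
      have "fc (n - 1) (k - 1) True (fc n j \<beta> x) = fc (n - 1) j \<beta> (fc n k True x)"
        using fc_fc[OF x, of j k \<beta> True] True j k by simp
      also have "\<dots> = fc (n - 1) (k - 1) False (fc n j \<beta> y)"
        using fc_fc[OF y, of j k \<beta> False] True j k e by simp
      finally have c: "fc (n - 1) (k - 1) True (fc n j \<beta> x) = fc (n - 1) (k - 1) False (fc n j \<beta> y)" .
      have "fc (n - 1) (k - 1) True (fc n j \<beta> x) = degs1 dg (n - j - 1) (j - 1) (fc (n - j) (k - j) True a)"
        unfolding a(2) by (rule fc_degs1_high'[OF a(1)]) (use True j k in arith)+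
      moreover have "fc (n - 1) (k - 1) False (fc n j \<beta> y) = degs1 dg (n - j - 1) (j - 1) (fc (n - j) (k - j) False b)"
        unfolding b(2) by (rule fc_degs1_high'[OF b(1)]) (use True j k in arith)+
      ultimately have "degs1 dg (n - j - 1) (j - 1) (fc (n - j) (k - j) True a) = degs1 dg (n - j - 1) (j - 1) (fc (n - j) (k - j) False b)"
        using c by simp
      moreover have "fc (n - j) (k - j) True a \<in> G (n - j - 1)"
        by (rule fc_G'[OF a(1)]) (use True k j in arith)+
      moreover have "fc (n - j) (k - j) False b \<in> G (n - j - 1)"
        by (rule fc_G'[OF b(1)]) (use True k j in arith)+
      ultimately have ab: "fc (n - j) (k - j) True a = fc (n - j) (k - j) False b"
        using degs1_inj by blast
      have "cmp (n - 1) (k - 1) (degs1 dg (n - j) (j - 1) a) (degs1 dg (n - j) (j - 1) b) = degs1 dg (n - j) (j - 1) (cmp (n - j) (k - j) a b)"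
        by (rule degs1_cmp'[OF a(1) b(1) _ _ ab]) (use True j k in arith)+
      moreover have "cmp (n - j) (k - j) a b \<in> G (n - j)"
        by (rule cmp_G[OF a(1) b(1) _ _ ab]) (use True j k in arith)+
      ultimately show ?thesis using f1 a(2) b(2) by auto
    next
      case False2: False
      then have kj: "k < j" using False by simp
      have f1: "fc n j \<beta> (cmp n k x y) = cmp (n - 1) k (fc n j \<beta> x) (fc n j \<beta> y)"
        using FC kj j by auto
      have "fc (n - 1) k True (fc n j \<beta> x) = fc (n - 1) (j - 1) \<beta> (fc n k True x)"
        using fc_fc[OF x, of k j True \<beta>] kj j k by simp
      also have "\<dots> = fc (n - 1) k False (fc n j \<beta> y)"
        using fc_fc[OF y, of k j False \<beta>] kj j k e by simp
      finally have c: "fc (n - 1) k True (fc n j \<beta> x) = fc (n - 1) k False (fc n j \<beta> y)" .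
      have "fc (n - 1) k True (fc n j \<beta> x) = degs1 dg (n - j) (j - 1 - 1) a"
        unfolding a(2) by (rule fc_degs1_low'[OF a(1)]) (use kj j k in arith)+
      moreover have "fc (n - 1) k False (fc n j \<beta> y) = degs1 dg (n - j) (j - 1 - 1) b"
        unfolding b(2) by (rule fc_degs1_low'[OF b(1)]) (use kj j k in arith)+
      ultimately have "a = b" using c degs1_inj a(1) b(1) by metis
      have "cmp (n - 1) k (degs1 dg (n - j) (j - 1) a) (degs1 dg (n - j) (j - 1) a) = degs1 dg (n - j) (j - 1) a"
        by (rule degs1_idem'[OF a(1)]) (use kj j k in arith)+
      then show ?thesis using f1 a b \<open>a = b\<close> by auto
    qed
  qed
qed

lemma gam_Phi_d: "gam n x \<Longrightarrow> gam n (Phi_d fc dg n p \<alpha> x)"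
proof (cases "p < n")
  case True
  assume g: "gam n x"
  have "gam (n - (n - p)) (faces1 fc n (n - p) \<alpha> x)" using gam_faces1[OF g] by simp
  then have "gam p (faces1 fc n (n - p) \<alpha> x)" using True by simp
  then have "gam (p + (n - p)) (degs1 dg p (n - p) (faces1 fc n (n - p) \<alpha> x))" by (rule gam_degs1)
  then show ?thesis using True unfolding Phi_d_def by simp
next
  case False
  assume g: "gam n x"
  then show ?thesis using False unfolding Phi_d_def by simp
qed

end

context cub begin

abbreviation "ps \<equiv> psi fc cn cmp"

lemma psi_facts:
  assumes x: "x \<in> G (Suc m)" and i: "1 \<le> i" "i \<le> m"
  shows "ps (Suc m) i x \<in> G (Suc m)"
    and "fc (Suc m) (i + 1) False (ps (Suc m) i x) = dg (m - 1) i (fc m i False (fc (Suc m) (i + 1) False x))"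
    and "fc (Suc m) (i + 1) True (ps (Suc m) i x) = dg (m - 1) i (fc m i True (fc (Suc m) (i + 1) True x))"
    and "\<And>j \<alpha>. i + 1 < j \<Longrightarrow> j \<le> Suc m \<Longrightarrow> fc (Suc m) j \<alpha> (ps (Suc m) i x) = ps m i (fc (Suc m) j \<alpha> x)"
proof -
  define wm where "wm = fc (Suc m) (i + 1) False x"
  define wp where "wp = fc (Suc m) (i + 1) True x"
  define A where "A = cn m i True wm"
  define B where "B = cmp (Suc m) (i + 1) A x"
  define C where "C = cn m i False wp"
  have P: "ps (Suc m) i x = cmp (Suc m) (i + 1) B C"
    unfolding psi_def A_def B_def C_def wm_def wp_def by simp
  have wm: "wm \<in> G m" using fc_G[OF x, of "i + 1" False] i unfolding wm_def by simp
  have wp: "wp \<in> G m" using fc_G[OF x, of "i + 1" True] i unfolding wp_def by simp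
  have A: "A \<in> G (Suc m)" using cn_G[OF wm, of i True] i unfolding A_def by simp
  have C: "C \<in> G (Suc m)" using cn_G[OF wp, of i False] i unfolding C_def by simp
  have A1: "fc (Suc m) (i + 1) True A = wm" using fc_cn[OF wm, of i "i + 1" True True] i unfolding A_def by simp
  have A0: "fc (Suc m) (i + 1) False A = dg (m - 1) i (fc m i False wm)"
    using fc_cn[OF wm, of i "i + 1" False True] i unfolding A_def by simp
  have C0: "fc (Suc m) (i + 1) False C = wp" using fc_cn[OF wp, of i "i + 1" False False] i unfolding C_def by simp
  have C1: "fc (Suc m) (i + 1) True C = dg (m - 1) i (fc m i True wp)"
    using fc_cn[OF wp, of i "i + 1" True False] i unfolding C_def by simp
  have eAx: "fc (Suc m) (i + 1) True A = fc (Suc m) (i + 1) False x" using A1 wm_def by simp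
  note FB = fc_cmp[OF A x _ _ eAx]
  have B: "B \<in> G (Suc m)" using cmp_G[OF A x _ _ eAx] i unfolding B_def by simp
  have B1: "fc (Suc m) (i + 1) True B = wp" using FB i unfolding B_def wp_def by simp
  have B0: "fc (Suc m) (i + 1) False B = dg (m - 1) i (fc m i False wm)" using FB i A0 unfolding B_def by simp
  have eBC: "fc (Suc m) (i + 1) True B = fc (Suc m) (i + 1) False C" using B1 C0 by simp
  note FP = fc_cmp[OF B C _ _ eBC]
  show "ps (Suc m) i x \<in> G (Suc m)" using cmp_G[OF B C _ _ eBC] i P by simp
  show "fc (Suc m) (i + 1) False (ps (Suc m) i x) = dg (m - 1) i (fc m i False (fc (Suc m) (i + 1) False x))"
    using FP i P B0 wm_def by simp
  show "fc (Suc m) (i + 1) True (ps (Suc m) i x) = dg (m - 1) i (fc m i True (fc (Suc m) (i + 1) True x))"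
    using FP i P C1 wp_def by simp
  fix j \<alpha> assume j: "i + 1 < j" "j \<le> Suc m"
  have "fc (Suc m) j \<alpha> (ps (Suc m) i x) = cmp m (i + 1) (fc (Suc m) j \<alpha> B) (fc (Suc m) j \<alpha> C)"
    using FP i j P by simp
  also have "fc (Suc m) j \<alpha> B = cmp m (i + 1) (fc (Suc m) j \<alpha> A) (fc (Suc m) j \<alpha> x)"
    using FB i j unfolding B_def by simp
  also have "fc (Suc m) j \<alpha> A = cn (m - 1) i True (fc m (j - 1) \<alpha> wm)"
    using fc_cn[OF wm, of i j \<alpha> True] i j unfolding A_def by simp
  also have "fc m (j - 1) \<alpha> wm = fc m (i + 1) False (fc (Suc m) j \<alpha> x)"
    using fc_fc[OF x, of "i + 1" j False \<alpha>] i j unfolding wm_def by simp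
  also have "fc (Suc m) j \<alpha> C = cn (m - 1) i False (fc m (j - 1) \<alpha> wp)"
    using fc_cn[OF wp, of i j \<alpha> False] i j unfolding C_def by simp
  also have "fc m (j - 1) \<alpha> wp = fc m (i + 1) True (fc (Suc m) j \<alpha> x)"
    using fc_fc[OF x, of "i + 1" j True \<alpha>] i j unfolding wp_def by simp
  finally show "fc (Suc m) j \<alpha> (ps (Suc m) i x) = ps m i (fc (Suc m) j \<alpha> x)"
    unfolding psi_def by simp
qed

lemma psi_fix:
  assumes x: "x \<in> G (Suc m)" and i: "1 \<le> i" "i \<le> m"
    and z0: "z0 \<in> G (m - 1)" "fc (Suc m) (i + 1) False x = dg (m - 1) i z0"
    and z1: "z1 \<in> G (m - 1)" "fc (Suc m) (i + 1) True x = dg (m - 1) i z1"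
  shows "ps (Suc m) i x = x"
proof -
  obtain m' where m: "m = Suc m'" using i by (cases m) auto
  have a: "cn m i True (fc (Suc m) (i + 1) False x) = dg m (i + 1) (fc (Suc m) (i + 1) False x)"
    using cn_dg_eq[of z0 m' i True] z0 i m by simp
  have c: "cn m i False (fc (Suc m) (i + 1) True x) = dg m (i + 1) (fc (Suc m) (i + 1) True x)"
    using cn_dg_eq[of z1 m' i False] z1 i m by simp
  have I: "cmp (Suc m) (i + 1) (dg m (i + 1) (fc (Suc m) (i + 1) False x)) x = x \<and>
        cmp (Suc m) (i + 1) x (dg m (i + 1) (fc (Suc m) (i + 1) True x)) = x"
    using ident[OF x, of "i + 1"] i by simp
  show ?thesis unfolding psi_def using a c I by simp
qed

lemma psi_fix_degs1:
  assumes z: "z \<in> G p" and N: "Suc m = p + k" and i: "1 \<le> i" "i + 1 \<le> k"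
  shows "ps (Suc m) i (degs1 dg p k z) = degs1 dg p k z"
proof -
  obtain k' where k: "k = Suc (Suc k')" using i by (cases k; cases "k - 1") auto
  have e: "fc (Suc m) (i + 1) \<alpha> (degs1 dg p k z) = dg (m - 1) i (degs1 dg p k' z)" for \<alpha>
  proof -
    have "fc (Suc m) (i + 1) \<alpha> (degs1 dg p k z) = degs1 dg p (k - 1) z"
      by (rule fc_degs1_low'[OF z N]) (use i in arith)+
    also have "\<dots> = dg (p + k') i (degs1 dg p k' z)"
      using degs1_dgk[OF z, of i k'] i k by simp
    finally show ?thesis using N k by simp
  qed
  have g: "degs1 dg p k' z \<in> G (m - 1)" using degs1_G'[OF z, of "m - 1" k'] N k by simp
  show ?thesis
    by (rule psi_fix[OF _ _ _ g e g e]) (use degs1_G'[OF z N] i N in auto)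
qed

lemma psi_fix_gam:
  assumes g: "gam (Suc m) x" and i: "1 \<le> i" "i \<le> m"
  shows "ps (Suc m) i x = x"
proof -
  have x: "x \<in> G (Suc m)" using gamG[OF g] .
  have e: "\<exists>z. z \<in> G (m - 1) \<and> fc (Suc m) (i + 1) \<alpha> x = dg (m - 1) i z" for \<alpha>
  proof -
    obtain z where z: "z \<in> G (Suc m - (i + 1))" "fc (Suc m) (i + 1) \<alpha> x = degs1 dg (Suc m - (i + 1)) (i + 1 - 1) z"
      using gamD[OF g, of "i + 1" \<alpha>] i by auto
    obtain i' where i': "i = Suc i'" using i by (cases i) auto
    have "degs1 dg (Suc m - (i + 1)) (Suc i') z = dg (Suc m - (i + 1) + i') i (degs1 dg (Suc m - (i + 1)) i' z)"
      by (rule degs1_dgk[OF z(1)]) (use i i' in auto)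
    moreover have "Suc m - (i + 1) + i' = m - 1" using i i' by arith
    moreover have "degs1 dg (Suc m - (i + 1)) i' z \<in> G (m - 1)"
      by (rule degs1_G'[OF z(1)]) (use i i' in arith)
    ultimately show ?thesis using z i' by auto
  qed
  obtain z0 where z0: "z0 \<in> G (m - 1)" "fc (Suc m) (i + 1) False x = dg (m - 1) i z0" using e by blast
  obtain z1 where z1: "z1 \<in> G (m - 1)" "fc (Suc m) (i + 1) True x = dg (m - 1) i z1" using e by blast
  show ?thesis by (rule psi_fix[OF x i z0 z1])
qed

end

context cub begin

abbreviation "Ps \<equiv> Psi fc cn cmp"
abbreviation "Pa \<equiv> Phi_aux fc cn cmp"

lemma Psi_G: "x \<in> G n \<Longrightarrow> r \<le> n \<Longrightarrow> Ps n r x \<in> G n"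
proof (induction r)
  case 0 then show ?case by simp
next
  case (Suc r)
  show ?case
  proof (cases r)
    case 0 then show ?thesis using Suc by simp
  next
    case (Suc r')
    obtain m where n: "n = Suc m" using Suc.prems by (cases n) auto
    have "Ps n r x \<in> G n" by (rule Suc.IH) (use Suc.prems in auto)
    then have "ps (Suc m) (Suc r') (Ps n r x) \<in> G (Suc m)"
      using psi_facts(1)[of "Ps n r x" m "Suc r'"] n Suc.prems \<open>r = Suc r'\<close> by simp
    then show ?thesis using \<open>r = Suc r'\<close> n by simp
  qed
qed

lemma Psi_fc: "x \<in> G n \<Longrightarrow> 1 \<le> r \<Longrightarrow> r < j \<Longrightarrow> j \<le> n \<Longrightarrow> fc n j \<alpha> (Ps n r x) = Ps (n - 1) r (fc n j \<alpha> x)"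
proof (induction r)
  case 0 then show ?case by simp
next
  case (Suc r)
  show ?case
  proof (cases r)
    case 0 then show ?thesis by simp
  next
    case (Suc r')
    obtain m where n: "n = Suc m" using Suc.prems by (cases n) auto
    have v: "Ps n r x \<in> G n" using Psi_G Suc.prems by simp
    have "fc n j \<alpha> (Ps n (Suc r) x) = fc (Suc m) j \<alpha> (ps (Suc m) (Suc r') (Ps n r x))"
      using n \<open>r = Suc r'\<close> by simp
    also have "\<dots> = ps m (Suc r') (fc (Suc m) j \<alpha> (Ps n r x))"
      using psi_facts(4)[of "Ps n r x" m "Suc r'" j \<alpha>] v n Suc.prems \<open>r = Suc r'\<close> by simp
    also have "fc (Suc m) j \<alpha> (Ps n r x) = Ps m r (fc n j \<alpha> x)"
      using Suc.IH Suc.prems n \<open>r = Suc r'\<close> by simp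
    finally show ?thesis using n \<open>r = Suc r'\<close> by simp
  qed
qed

lemma Psi_fix_degs1: "z \<in> G p \<Longrightarrow> n = p + k \<Longrightarrow> r \<le> k \<Longrightarrow> Ps n r (degs1 dg p k z) = degs1 dg p k z"
proof (induction r)
  case 0 then show ?case by simp
next
  case (Suc r)
  show ?case
  proof (cases r)
    case 0 then show ?thesis by simp
  next
    case (Suc r')
    define m where "m = n - 1"
    have n: "n = Suc m" using Suc.prems \<open>r = Suc r'\<close> m_def by arith
    have "Ps n (Suc r) (degs1 dg p k z) = ps n (Suc r') (Ps n r (degs1 dg p k z))"
      using \<open>r = Suc r'\<close> by simp
    also have "Ps n r (degs1 dg p k z) = degs1 dg p k z" by (rule Suc.IH) (use Suc.prems in auto)
    also have "ps n (Suc r') (degs1 dg p k z) = degs1 dg p k z"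
      unfolding n by (rule psi_fix_degs1) (use Suc.prems n \<open>r = Suc r'\<close> in auto)
    finally show ?thesis .
  qed
qed

lemma Psi_fix_gam: "gam n x \<Longrightarrow> r \<le> n \<Longrightarrow> Ps n r x = x"
proof (induction r)
  case 0 then show ?case by simp
next
  case (Suc r)
  show ?case
  proof (cases r)
    case 0 then show ?thesis by simp
  next
    case (Suc r')
    define m where "m = n - 1"
    have n: "n = Suc m" using Suc.prems \<open>r = Suc r'\<close> m_def by arith
    have "Ps n (Suc r) x = ps n (Suc r') (Ps n r x)"
      using \<open>r = Suc r'\<close> by simp
    also have "Ps n r x = x" by (rule Suc.IH) (use Suc.prems in auto)
    also have "ps n (Suc r') x = x"
      unfolding n by (rule psi_fix_gam) (use Suc.prems n \<open>r = Suc r'\<close> in auto)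
    finally show ?thesis .
  qed
qed

lemma Pa_G: "x \<in> G n \<Longrightarrow> m \<le> n \<Longrightarrow> Pa n m x \<in> G n"
proof (induction m arbitrary: x)
  case 0 then show ?case by simp
next
  case (Suc m)
  then show ?case using Psi_G[OF Suc.prems(1) Suc.prems(2)] by simp
qed

lemma Pa_fc: "x \<in> G n \<Longrightarrow> m < j \<Longrightarrow> j \<le> n \<Longrightarrow> fc n j \<alpha> (Pa n m x) = Pa (n - 1) m (fc n j \<alpha> x)"
proof (induction m arbitrary: x)
  case 0 then show ?case by simp
next
  case (Suc m)
  have v: "Ps n (Suc m) x \<in> G n" using Psi_G Suc.prems by simp
  have "fc n j \<alpha> (Pa n (Suc m) x) = fc n j \<alpha> (Pa n m (Ps n (Suc m) x))" by simp
  also have "\<dots> = Pa (n - 1) m (fc n j \<alpha> (Ps n (Suc m) x))" using Suc.IH[OF v] Suc.prems by simp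
  also have "fc n j \<alpha> (Ps n (Suc m) x) = Ps (n - 1) (Suc m) (fc n j \<alpha> x)"
    using Psi_fc Suc.prems by simp
  finally show ?case by simp
qed

lemma Pa_fix_degs1: "z \<in> G p \<Longrightarrow> n = p + k \<Longrightarrow> m \<le> k \<Longrightarrow> Pa n m (degs1 dg p k z) = degs1 dg p k z"
  by (induction m) (simp_all add: Psi_fix_degs1)

lemma Pa_fix_gam: "gam n x \<Longrightarrow> m \<le> n \<Longrightarrow> Pa n m x = x"
  by (induction m) (simp_all add: Psi_fix_gam)

lemma Psi_key: "x \<in> G n \<Longrightarrow> 1 \<le> m \<Longrightarrow> m \<le> n \<Longrightarrow> \<exists>z\<in>G (n - m). fc n m \<alpha> (Ps n m x) = degs1 dg (n - m) (m - 1) z"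
proof (induction m)
  case 0 then show ?case by simp
next
  case (Suc m)
  show ?case
  proof (cases m)
    case 0
    then show ?thesis using fc_G[OF Suc.prems(1), of 1 \<alpha>] Suc.prems by auto
  next
    case (Suc m')
    obtain N where n: "n = Suc N" using Suc.prems by (cases n) auto
    define v where "v = Ps n m x"
    have v: "v \<in> G n" using Psi_G Suc.prems v_def by simp
    obtain z where z: "z \<in> G (n - m)" "fc n m \<alpha> v = degs1 dg (n - m) (m - 1) z"
      using Suc.IH Suc.prems \<open>m = Suc m'\<close> v_def by auto
    have "fc n (Suc m) \<alpha> (Ps n (Suc m) x) = fc (Suc N) (m + 1) \<alpha> (ps (Suc N) m v)"
      using n \<open>m = Suc m'\<close> v_def by simp
    also have "\<dots> = dg (N - 1) m (fc N m \<alpha> (fc (Suc N) (m + 1) \<alpha> v))"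
      using psi_facts(2,3)[of v N m] v n Suc.prems \<open>m = Suc m'\<close> by (cases \<alpha>) auto
    also have "fc N m \<alpha> (fc (Suc N) (m + 1) \<alpha> v) = fc N m \<alpha> (fc n m \<alpha> v)"
      using fc_fc[of v n m "m + 1" \<alpha> \<alpha>] v n Suc.prems \<open>m = Suc m'\<close> by simp
    also have "\<dots> = degs1 dg (n - m - 1) (m - 1) (fc (n - m) 1 \<alpha> z)"
      unfolding z(2) by (rule fc_degs1_high'[OF z(1)]) (use n Suc.prems \<open>m = Suc m'\<close> in arith)+
    also have "dg (N - 1) m (degs1 dg (n - m - 1) (m - 1) (fc (n - m) 1 \<alpha> z)) = degs1 dg (n - m - 1) (Suc (m - 1)) (fc (n - m) 1 \<alpha> z)"
    proof -
      have zz: "fc (n - m) 1 \<alpha> z \<in> G (n - m - 1)" by (rule fc_G'[OF z(1)]) (use n Suc.prems in arith)+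
      have "degs1 dg (n - m - 1) (Suc (m - 1)) (fc (n - m) 1 \<alpha> z) = dg (n - m - 1 + (m - 1)) m (degs1 dg (n - m - 1) (m - 1) (fc (n - m) 1 \<alpha> z))"
        by (rule degs1_dgk[OF zz]) (use \<open>m = Suc m'\<close> in arith)+
      moreover have "n - m - 1 + (m - 1) = N - 1" using n Suc.prems \<open>m = Suc m'\<close> by arith
      ultimately show ?thesis by simp
    qed
    finally have e: "fc n (Suc m) \<alpha> (Ps n (Suc m) x) = degs1 dg (n - Suc m) (Suc m - 1) (fc (n - m) 1 \<alpha> z)"
      using \<open>m = Suc m'\<close> by simp
    have zz: "fc (n - m) 1 \<alpha> z \<in> G (n - Suc m)" by (rule fc_G'[OF z(1)]) (use n Suc.prems in arith)+
    show ?thesis using e zz by blast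
  qed
qed

lemma Pa_gam: "x \<in> G n \<Longrightarrow> m \<le> n \<Longrightarrow> 2 \<le> j \<Longrightarrow> j \<le> m \<Longrightarrow> \<exists>z\<in>G (n - j). fc n j \<alpha> (Pa n m x) = degs1 dg (n - j) (j - 1) z"
proof (induction m arbitrary: x j)
  case 0 then show ?case by simp
next
  case (Suc m)
  define v where "v = Ps n (Suc m) x"
  have v: "v \<in> G n" using Psi_G Suc.prems v_def by simp
  have P: "Pa n (Suc m) x = Pa n m v" using v_def by simp
  show ?case
  proof (cases "j \<le> m")
    case True
    then show ?thesis using Suc.IH[OF v] Suc.prems P by simp
  next
    case False
    then have j: "j = Suc m" using Suc.prems by simp
    obtain z where z: "z \<in> G (n - Suc m)" "fc n (Suc m) \<alpha> v = degs1 dg (n - Suc m) m z"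
      using Psi_key[OF Suc.prems(1), of "Suc m" \<alpha>] Suc.prems v_def by auto
    have "fc n j \<alpha> (Pa n (Suc m) x) = Pa (n - 1) m (fc n (Suc m) \<alpha> v)"
      using Pa_fc[OF v, of m "Suc m" \<alpha>] P j Suc.prems by simp
    also have "\<dots> = degs1 dg (n - Suc m) m z"
      unfolding z(2) by (rule Pa_fix_degs1[OF z(1)]) (use Suc.prems in arith)+
    finally show ?thesis using z j by auto
  qed
qed

lemma Phi_gam: "x \<in> G n \<Longrightarrow> gam n (Phi fc cn cmp n x)"
  unfolding Phi_def
proof (rule gamI)
  assume x: "x \<in> G n"
  show "Pa n n x \<in> G n" by (rule Pa_G[OF x]) simp
  fix j \<alpha> assume "2 \<le> j" "j \<le> n"
  then show "\<exists>z\<in>G (n - j). fc n j \<alpha> (Pa n n x) = degs1 dg (n - j) (j - 1) z"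
    by (intro Pa_gam[OF x]) auto
qed

lemma Phi_image: "Phi fc cn cmp n ` G n = {x. gam n x}"
proof
  show "Phi fc cn cmp n ` G n \<subseteq> {x. gam n x}" using Phi_gam by auto
  show "{x. gam n x} \<subseteq> Phi fc cn cmp n ` G n"
  proof
    fix x assume "x \<in> {x. gam n x}"
    then have g: "gam n x" by simp
    then have "x = Phi fc cn cmp n x" unfolding Phi_def using Pa_fix_gam by simp
    then show "x \<in> Phi fc cn cmp n ` G n" using gamG[OF g] by blast
  qed
qed

end

context cub begin

abbreviation "Dd \<equiv> Phi_d fc dg"
abbreviation "Cc \<equiv> Phi_c cmp"

lemma Dd_lt: "p < n \<Longrightarrow> Dd n p \<alpha> x = degs1 dg p (n - p) (faces1 fc n (n - p) \<alpha> x)"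
  unfolding Phi_d_def by simp
lemma Dd_ge: "\<not> p < n \<Longrightarrow> Dd n p \<alpha> x = x"
  unfolding Phi_d_def by simp
lemma Cc_lt: "p < n \<Longrightarrow> Cc n p x y = cmp n (n - p) x y"
  unfolding Phi_c_def by simp
lemma Cc_ge: "\<not> p < n \<Longrightarrow> Cc n p x y = x"
  unfolding Phi_c_def by simp

lemma degs1_add: "degs1 dg p (a + b) z = degs1 dg (p + a) b (degs1 dg p a z)"
  by (induction b) (simp_all add: add.assoc)

lemma faces1_cmp: "x \<in> G n \<Longrightarrow> y \<in> G n \<Longrightarrow> 1 \<le> k \<Longrightarrow> k \<le> n \<Longrightarrow> fc n k True x = fc n k False y \<Longrightarrow> m < k \<Longrightarrow>
   fc (n - m) (k - m) True (faces1 fc n m \<beta> x) = fc (n - m) (k - m) False (faces1 fc n m \<beta> y) \<and>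
   faces1 fc n m \<beta> (cmp n k x y) = cmp (n - m) (k - m) (faces1 fc n m \<beta> x) (faces1 fc n m \<beta> y)"
proof (induction m)
  case 0 then show ?case by simp
next
  case (Suc m)
  define X where "X = faces1 fc n m \<beta> x"
  define Y where "Y = faces1 fc n m \<beta> y"
  have X: "X \<in> G (n - m)" using faces1_G Suc.prems X_def by simp
  have Y: "Y \<in> G (n - m)" using faces1_G Suc.prems Y_def by simp
  have IH: "fc (n - m) (k - m) True X = fc (n - m) (k - m) False Y"
     "faces1 fc n m \<beta> (cmp n k x y) = cmp (n - m) (k - m) X Y"
    using Suc X_def Y_def by auto
  note FC = fc_cmp[OF X Y _ _ IH(1)]
  have c: "fc (n - Suc m) (k - Suc m) True (fc (n - m) 1 \<beta> X) = fc (n - Suc m) (k - Suc m) False (fc (n - m) 1 \<beta> Y)"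
  proof -
    have "fc (n - m - 1) (k - m - 1) True (fc (n - m) 1 \<beta> X) = fc (n - m - 1) 1 \<beta> (fc (n - m) (k - m) True X)"
      using fc_fc[OF X, of 1 "k - m" \<beta> True] Suc.prems by simp
    also have "\<dots> = fc (n - m - 1) 1 \<beta> (fc (n - m) (k - m) False Y)" using IH by simp
    also have "\<dots> = fc (n - m - 1) (k - m - 1) False (fc (n - m) 1 \<beta> Y)"
      using fc_fc[OF Y, of 1 "k - m" \<beta> False] Suc.prems by simp
    finally show ?thesis by simp
  qed
  have "faces1 fc n (Suc m) \<beta> (cmp n k x y) = fc (n - m) 1 \<beta> (cmp (n - m) (k - m) X Y)"
    using faces1_Suc'[of n m \<beta> "cmp n k x y"] IH by simp
  also have "\<dots> = cmp (n - m - 1) (k - m - 1) (fc (n - m) 1 \<beta> X) (fc (n - m) 1 \<beta> Y)"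
    using FC Suc.prems by auto
  finally show ?case using c faces1_Suc'[of n m \<beta> x] faces1_Suc'[of n m \<beta> y] X_def Y_def by simp
qed

lemma faces1_cmp_k: "x \<in> G n \<Longrightarrow> y \<in> G n \<Longrightarrow> 1 \<le> k \<Longrightarrow> k \<le> n \<Longrightarrow> fc n k True x = fc n k False y \<Longrightarrow>
   faces1 fc n k False (cmp n k x y) = faces1 fc n k False x \<and> faces1 fc n k True (cmp n k x y) = faces1 fc n k True y"
proof -
  assume x: "x \<in> G n" and y: "y \<in> G n" and k: "1 \<le> k" "k \<le> n" and e: "fc n k True x = fc n k False y"
  have A: "fc (n - (k - 1)) 1 True (faces1 fc n (k - 1) \<beta> x) = fc (n - (k - 1)) 1 False (faces1 fc n (k - 1) \<beta> y) \<and>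
   faces1 fc n (k - 1) \<beta> (cmp n k x y) = cmp (n - (k - 1)) 1 (faces1 fc n (k - 1) \<beta> x) (faces1 fc n (k - 1) \<beta> y)" for \<beta>
    using faces1_cmp[OF x y k e, of "k - 1" \<beta>] k by simp
  have X: "faces1 fc n (k - 1) \<beta> x \<in> G (n - (k - 1))" for \<beta> by (rule faces1_G'[OF x]) (use k in arith)+
  have Y: "faces1 fc n (k - 1) \<beta> y \<in> G (n - (k - 1))" for \<beta> by (rule faces1_G'[OF y]) (use k in arith)+
  have S: "faces1 fc n k \<beta> w = fc (n - (k - 1)) 1 \<beta> (faces1 fc n (k - 1) \<beta> w)" for \<beta> w
    using faces1_Suc'[of n "k - 1" \<beta> w] k by simp
  show ?thesis
    using fc_cmp[OF X Y _ _ A[THEN conjunct1], of False] fc_cmp[OF X Y _ _ A[THEN conjunct1], of True] A k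
    unfolding S by auto
qed

lemma dd_law: "gam n x \<Longrightarrow> Dd n q \<beta> (Dd n p \<alpha> x) = (if q < p then Dd n q \<beta> x else Dd n p \<alpha> x)"
proof -
  assume g: "gam n x"
  have x: "x \<in> G n" using gamG[OF g] .
  show ?thesis
  proof (cases "p < n")
    case False
    then show ?thesis using Dd_ge[OF False] by (simp add: Dd_ge)
  next
    case pn: True
    define y where "y = faces1 fc n (n - p) \<alpha> x"
    have y: "y \<in> G p" using faces1_G'[OF x, of "n - p" p \<alpha>] pn y_def by simp
    have D1: "Dd n p \<alpha> x = degs1 dg p (n - p) y" using Dd_lt[OF pn] y_def by simp
    show ?thesis
    proof (cases "q < n")
      case False
      then show ?thesis using pn Dd_ge[OF False] by simp
    next
      case qn: True
      have D2: "Dd n q \<beta> (Dd n p \<alpha> x) = degs1 dg q (n - q) (faces1 fc n (n - q) \<beta> (degs1 dg p (n - p) y))"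
        using Dd_lt[OF qn] D1 by simp
      show ?thesis
      proof (cases "q < p")
        case False
        have "faces1 fc n (n - q) \<beta> (degs1 dg p (n - p) y) = degs1 dg p (n - p - (n - q)) y"
          by (rule faces1_degs1'[OF y]) (use pn qn False in arith)+
        moreover have "n - p - (n - q) = q - p" using pn qn False by arith
        moreover have "degs1 dg q (n - q) (degs1 dg p (q - p) y) = degs1 dg p (n - p) y"
          using degs1_add[of p "q - p" "n - q" y] pn qn False by simp
        ultimately show ?thesis using D1 D2 False by simp
      next
        case True
        have "faces1 fc n (n - q) \<beta> (degs1 dg p (n - p) y) = faces1 fc (n - (n - p)) (p - q) \<beta> (faces1 fc n (n - p) \<beta> (degs1 dg p (n - p) y))"
          using faces1_add[of n "n - p" "p - q" \<beta> "degs1 dg p (n - p) y"] pn qn True by simp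
        also have "faces1 fc n (n - p) \<beta> (degs1 dg p (n - p) y) = y"
          using faces1_degs1'[OF y, of n "n - p" "n - p" \<beta>] pn by simp
        also have "faces1 fc (n - (n - p)) (p - q) \<beta> y = faces1 fc n (p - q + (n - p)) \<beta> x"
          unfolding y_def by (rule faces1_mix[OF g]) (use pn True in arith)+
        also have "p - q + (n - p) = n - q" using pn True by arith
        finally show ?thesis using D2 True Dd_lt[OF qn] by simp
      qed
    qed
  qed
qed

lemma dim_law:
  assumes dd: "\<And>p q \<alpha> \<beta>. d q \<beta> (d p \<alpha> x) = (if q < p then d q \<beta> x else d p \<alpha> x)"
    and N: "\<And>\<alpha>. d N \<alpha> x = x"
  shows "\<exists>m::nat. \<forall>p \<alpha>. d p \<alpha> x = x \<longleftrightarrow> m \<le> p"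
proof -
  define S where "S = {p. \<forall>\<alpha>. d p \<alpha> x = x}"
  have NS: "N \<in> S" using N S_def by simp
  define m where "m = (LEAST p. p \<in> S)"
  have mS: "m \<in> S" using LeastI[of "\<lambda>p. p \<in> S", OF NS] m_def by simp
  show ?thesis
  proof (intro exI allI iffI)
    fix p \<alpha> assume e: "d p \<alpha> x = x"
    have "d p \<beta> x = x" for \<beta> using dd[of p \<beta> p \<alpha>] e by simp
    then have "p \<in> S" using S_def by simp
    then show "m \<le> p" using Least_le m_def by metis
  next
    fix p \<alpha> assume mp: "m \<le> p"
    have "d m \<alpha> x = x" using mS S_def by simp
    then show "d p \<alpha> x = x" using dd[of p \<alpha> m \<alpha>] mp by simp
  qed
qed

end

context cub begin

lemma comp_d: "gam n x \<Longrightarrow> gam n y \<Longrightarrow> p < n \<Longrightarrow> Dd n p True x = Dd n p False y \<Longrightarrow> fc n (n - p) True x = fc n (n - p) False y"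
  by (rule comp_of_d) (auto simp: Dd_lt)

lemma gam_Cc: "gam n x \<Longrightarrow> gam n y \<Longrightarrow> Dd n p True x = Dd n p False y \<Longrightarrow> gam n (Cc n p x y)"
proof (cases "p < n")
  case True
  assume gx: "gam n x" and gy: "gam n y" and e: "Dd n p True x = Dd n p False y"
  show ?thesis using gam_cmp[OF gx gy _ _ comp_d[OF gx gy True e]] True Cc_lt[OF True] by simp
next
  case False
  assume "gam n x"
  then show ?thesis using Cc_ge[OF False] by simp
qed

lemma eq_ge: "\<not> p < n \<Longrightarrow> Dd n p True x = Dd n p False y \<Longrightarrow> x = y"
  using Dd_ge by simp

lemma d_Cc:
  assumes gx: "gam n x" and gy: "gam n y" and e: "Dd n p True x = Dd n p False y"
  shows "Dd n p False (Cc n p x y) = Dd n p False x \<and> Dd n p True (Cc n p x y) = Dd n p True y \<and>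
        (\<forall>q \<beta>. q \<noteq> p \<longrightarrow> Dd n q \<beta> (Cc n p x y) = Cc n p (Dd n q \<beta> x) (Dd n q \<beta> y))"
proof (cases "p < n")
  case False
  then have "x = y" using eq_ge e by blast
  then show ?thesis using Cc_ge[OF False] by simp
next
  case pn: True
  define k where "k = n - p"
  have k: "1 \<le> k" "k \<le> n" "p = n - k" using pn k_def by auto
  have x: "x \<in> G n" and y: "y \<in> G n" using gx gy gamG by auto
  have ce: "fc n k True x = fc n k False y" using comp_d[OF gx gy pn e] k_def by simp
  have C: "Cc n p x y = cmp n k x y" using Cc_lt[OF pn] k_def by simp
  have Cp: "Cc n p a b = cmp n k a b" for a b using Cc_lt[OF pn] k_def by simp
  have gz: "gam n (cmp n k x y)" using gam_cmp[OF gx gy k(1,2) ce] .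
  have z: "cmp n k x y \<in> G n" using gamG[OF gz] .
  note FK = faces1_cmp_k[OF x y k(1,2) ce]
  have part1: "Dd n p False (Cc n p x y) = Dd n p False x" "Dd n p True (Cc n p x y) = Dd n p True y"
    using FK C Dd_lt[OF pn] k_def by simp_all
  have part2: "Dd n q \<beta> (Cc n p x y) = Cc n p (Dd n q \<beta> x) (Dd n q \<beta> y)" if qp: "q \<noteq> p" for q \<beta>
  proof (cases "q < n")
    case False
    then show ?thesis using Dd_ge[OF False] by simp
  next
    case qn: True
    define k' where "k' = n - q"
    have k': "1 \<le> k'" "k' \<le> n" "q = n - k'" "k' \<noteq> k" using qn k'_def qp k by auto
    have DL: "Dd n q \<beta> w = degs1 dg q k' (faces1 fc n k' \<beta> w)" for w using Dd_lt[OF qn] k'_def by simp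
    show ?thesis
    proof (cases "k' < k")
      case True
      have FC: "fc (n - k') (k - k') True (faces1 fc n k' \<beta> x) = fc (n - k') (k - k') False (faces1 fc n k' \<beta> y) \<and>
        faces1 fc n k' \<beta> (cmp n k x y) = cmp (n - k') (k - k') (faces1 fc n k' \<beta> x) (faces1 fc n k' \<beta> y)"
        by (rule faces1_cmp[OF x y k(1,2) ce True])
      have fx: "faces1 fc n k' \<beta> x \<in> G q" by (rule faces1_G'[OF x]) (use k' in arith)+
      have fy: "faces1 fc n k' \<beta> y \<in> G q" by (rule faces1_G'[OF y]) (use k' in arith)+
      have "cmp n k (degs1 dg q k' (faces1 fc n k' \<beta> x)) (degs1 dg q k' (faces1 fc n k' \<beta> y)) =
            degs1 dg q k' (cmp q (k - k') (faces1 fc n k' \<beta> x) (faces1 fc n k' \<beta> y))"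
        by (rule degs1_cmp'[OF fx fy _ _ _]) (use FC k k' True in auto)
      then show ?thesis using DL Cp FC k' by simp
    next
      case False
      then have kk: "k < k'" using k' by simp
      have mixx: "faces1 fc (n - k) (k' - k) \<beta> (faces1 fc n k \<gamma> w) = faces1 fc n k' \<beta> w" if "gam n w" for w \<gamma>
        using faces1_mix[OF that, of "k' - k" k \<beta> \<gamma>] kk k' by simp
      have ff: "faces1 fc n k True x = faces1 fc n k False y" by (rule d_of_comp[OF gx gy k(1,2) ce])
      have uxy: "faces1 fc n k' \<beta> x = faces1 fc n k' \<beta> y"
        using mixx[OF gx, of True] mixx[OF gy, of False] ff by simp
      have spl: "faces1 fc n k' \<beta> w = faces1 fc (n - k) (k' - k) \<beta> (faces1 fc n k \<beta> w)" for w
        using faces1_add[of n k "k' - k" \<beta> w] kk by simp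
      have uz: "faces1 fc n k' \<beta> (cmp n k x y) = faces1 fc n k' \<beta> x"
      proof (cases \<beta>)
        case True
        then show ?thesis using spl[of "cmp n k x y"] FK mixx[OF gy, of True] uxy by simp
      next
        case False
        then show ?thesis using spl[of "cmp n k x y"] FK mixx[OF gx, of False] by simp
      qed
      have fx: "faces1 fc n k' \<beta> x \<in> G q" by (rule faces1_G'[OF x]) (use k' in arith)+
      have "cmp n k (degs1 dg q k' (faces1 fc n k' \<beta> x)) (degs1 dg q k' (faces1 fc n k' \<beta> x)) = degs1 dg q k' (faces1 fc n k' \<beta> x)"
        by (rule degs1_idem'[OF fx]) (use k k' kk in arith)+
      then show ?thesis using DL Cp uz uxy by simp
    qed
  qed
  show ?thesis using part1 part2 by blast
qed

lemma ident_law: "gam n x \<Longrightarrow> Cc n p (Dd n p False x) x = x \<and> Cc n p x (Dd n p True x) = x"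
proof -
  assume g: "gam n x"
  show "Cc n p (Dd n p False x) x = x \<and> Cc n p x (Dd n p True x) = x"
  proof (cases "p < n")
    case False
    then show ?thesis using Cc_ge Dd_ge by simp
  next
    case True
    define k where "k = n - p"
    have k: "1 \<le> k" "k \<le> n" "p = n - k" using True k_def by auto
    have x: "x \<in> G n" using gamG[OF g] .
    have fe: "dg (n - 1) k (fc n k \<gamma> x) = degs1 dg p k (faces1 fc n k \<gamma> x)" for \<gamma>
    proof -
      have fg: "faces1 fc n k \<gamma> x \<in> G p" by (rule faces1_G'[OF x]) (use k in arith)+
      have "degs1 dg p (Suc (k - 1)) (faces1 fc n k \<gamma> x) = dg (p + (k - 1)) k (degs1 dg p (k - 1) (faces1 fc n k \<gamma> x))"
        by (rule degs1_dgk[OF fg]) (use k in arith)+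
      moreover have "p + (k - 1) = n - 1" "Suc (k - 1) = k" using k by arith+
      ultimately show ?thesis using gam_fc_eq[OF g k(1,2), of \<gamma>] k by simp
    qed
    show ?thesis using ident[OF x k(1,2)] fe[of True] fe[of False] Cc_lt[OF True] Dd_lt[OF True] k_def by simp
  qed
qed

lemma gam_omega: "omega_cat {x. gam n x} (Dd n) (Cc n)"
  unfolding omega_cat_def
proof (intro conjI ballI allI impI)
  fix x p \<alpha> assume "x \<in> {x. gam n x}"
  then show "Dd n p \<alpha> x \<in> {x. gam n x}" using gam_Phi_d by simp
next
  fix x y p assume "x \<in> {x. gam n x}" "y \<in> {x. gam n x}" "Dd n p True x = Dd n p False y"
  then show "Cc n p x y \<in> {x. gam n x}" using gam_Cc by simp
next
  fix x p q \<alpha> \<beta> assume "x \<in> {x. gam n x}"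
  then show "Dd n q \<beta> (Dd n p \<alpha> x) = (if q < p then Dd n q \<beta> x else Dd n p \<alpha> x)" using dd_law by simp
next
  fix x y p assume "x \<in> {x. gam n x}" "y \<in> {x. gam n x}" "Dd n p True x = Dd n p False y"
  then show "Dd n p False (Cc n p x y) = Dd n p False x" using d_Cc by simp
next
  fix x y p assume "x \<in> {x. gam n x}" "y \<in> {x. gam n x}" "Dd n p True x = Dd n p False y"
  then show "Dd n p True (Cc n p x y) = Dd n p True y" using d_Cc by simp
next
  fix x y p q \<beta> assume "x \<in> {x. gam n x}" "y \<in> {x. gam n x}" "Dd n p True x = Dd n p False y" "q \<noteq> p"
  then show "Dd n q \<beta> (Cc n p x y) = Cc n p (Dd n q \<beta> x) (Dd n q \<beta> y)" using d_Cc by simp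
next
  fix x p assume "x \<in> {x. gam n x}"
  then show "Cc n p (Dd n p False x) x = x" using ident_law by simp
next
  fix x p assume "x \<in> {x. gam n x}"
  then show "Cc n p x (Dd n p True x) = x" using ident_law by simp
next
  fix x y z p assume "x \<in> {x. gam n x}" "y \<in> {x. gam n x}" "z \<in> {x. gam n x}"
    and e1: "Dd n p True x = Dd n p False y" and e2: "Dd n p True y = Dd n p False z"
  then have gx: "gam n x" and gy: "gam n y" and gz: "gam n z" by auto
  show "Cc n p (Cc n p x y) z = Cc n p x (Cc n p y z)"
  proof (cases "p < n")
    case False then show ?thesis using Cc_ge by simp
  next
    case True
    show ?thesis using assoc[OF gamG[OF gx] gamG[OF gy] gamG[OF gz] _ _ comp_d[OF gx gy True e1] comp_d[OF gy gz True e2]]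
      True Cc_lt[OF True] by simp
  qed
next
  fix x y x' y' p q
  assume "x \<in> {x. gam n x}" "y \<in> {x. gam n x}" "x' \<in> {x. gam n x}" "y' \<in> {x. gam n x}"
  then have gx: "gam n x" and gy: "gam n y" and gx': "gam n x'" and gy': "gam n y'" by auto
  assume pq: "p \<noteq> q"
    and e1: "Dd n p True x = Dd n p False y" and e2: "Dd n p True x' = Dd n p False y'"
    and e3: "Dd n q True (Cc n p x y) = Dd n q False (Cc n p x' y')"
    and e4: "Dd n q True x = Dd n q False x'" and e5: "Dd n q True y = Dd n q False y'"
    and e6: "Dd n p True (Cc n q x x') = Dd n p False (Cc n q y y')"
  show "Cc n q (Cc n p x y) (Cc n p x' y') = Cc n p (Cc n q x x') (Cc n q y y')"
  proof (cases "p < n")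
    case pF: False
    have "x = y" "x' = y'" using eq_ge[OF pF] e1 e2 by auto
    then show ?thesis using Cc_ge[OF pF] by simp
  next
    case pn: True
    show ?thesis
    proof (cases "q < n")
      case qF: False
      have "x = x'" "y = y'" using eq_ge[OF qF] e4 e5 by auto
      then show ?thesis using Cc_ge[OF qF] by simp
    next
      case qn: True
      have gxy: "gam n (Cc n p x y)" using gam_Cc[OF gx gy e1] .
      have gxy': "gam n (Cc n p x' y')" using gam_Cc[OF gx' gy' e2] .
      have gxx: "gam n (Cc n q x x')" using gam_Cc[OF gx gx' e4] .
      have gyy: "gam n (Cc n q y y')" using gam_Cc[OF gy gy' e5] .
      have i: "1 \<le> n - p \<and> n - p \<le> n \<and> 1 \<le> n - q \<and> n - q \<le> n \<and> n - p \<noteq> n - q" using pn qn pq by auto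
      show ?thesis
        using interchange[OF gamG[OF gx] gamG[OF gy] gamG[OF gx'] gamG[OF gy'] i
            comp_d[OF gx gy pn e1] comp_d[OF gx' gy' pn e2] _ comp_d[OF gx gx' qn e4] comp_d[OF gy gy' qn e5]]
          comp_d[OF gxy gxy' qn e3] comp_d[OF gxx gyy pn e6] Cc_lt[OF pn] Cc_lt[OF qn] by simp
    qed
  qed
next
  fix x assume "x \<in> {x. gam n x}"
  then have g: "gam n x" by simp
  show "\<exists>m. \<forall>p \<alpha>. Dd n p \<alpha> x = x \<longleftrightarrow> m \<le> p"
    by (rule dim_law[of "Dd n" x n]) (use dd_law[OF g] Dd_ge in auto)
qed

lemma gam_hom: "omega_hom {x. gam n x} (Dd n) (Cc n) {x. gam (Suc n) x} (Dd (Suc n)) (Cc (Suc n)) (dg n 1)"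
  unfolding omega_hom_def
proof (intro conjI ballI allI impI)
  fix x assume "x \<in> {x. gam n x}"
  then show "dg n 1 x \<in> {x. gam (Suc n) x}" using gam_dg1 by simp
next
  fix x p \<alpha> assume "x \<in> {x. gam n x}"
  then have g: "gam n x" by simp
  have x: "x \<in> G n" using gamG[OF g] .
  show "dg n 1 (Dd n p \<alpha> x) = Dd (Suc n) p \<alpha> (dg n 1 x)"
  proof (cases "p < n")
    case True
    have a: "Suc n - p = Suc (n - p)" using True by arith
    have "Dd (Suc n) p \<alpha> (dg n 1 x) = degs1 dg p (Suc (n - p)) (faces1 fc n (n - p) \<alpha> (fc (Suc n) 1 \<alpha> (dg n 1 x)))"
      using Dd_lt[of p "Suc n"] True a by simp
    also have "fc (Suc n) 1 \<alpha> (dg n 1 x) = x" using fc_dg_eq[OF x, of 1] by simp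
    also have "degs1 dg p (Suc (n - p)) (faces1 fc n (n - p) \<alpha> x) = dg n 1 (degs1 dg p (n - p) (faces1 fc n (n - p) \<alpha> x))"
      using True by simp
    finally show ?thesis using Dd_lt[OF True] by simp
  next
    case False
    show ?thesis
    proof (cases "p = n")
      case True
      have "Dd (Suc n) p \<alpha> (dg n 1 x) = dg n 1 (fc (Suc n) 1 \<alpha> (dg n 1 x))" using Dd_lt[of p "Suc n"] True by simp
      then show ?thesis using fc_dg_eq[OF x, of 1] Dd_ge[OF False] by simp
    next
      case False2: False
      then show ?thesis using False Dd_ge[OF False] Dd_ge[of p "Suc n"] by simp
    qed
  qed
next
  fix x y p assume "x \<in> {x. gam n x}" "y \<in> {x. gam n x}" and e: "Dd n p True x = Dd n p False y"
  then have gx: "gam n x" and gy: "gam n y" by auto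
  have x: "x \<in> G n" using gamG[OF gx] .
  show "dg n 1 (Cc n p x y) = Cc (Suc n) p (dg n 1 x) (dg n 1 y)"
  proof (cases "p < n")
    case True
    have ce: "fc n (n - p) True x = fc n (n - p) False y" using comp_d[OF gx gy True e] .
    have "dg n 1 (cmp n (n - p) x y) = cmp (Suc n) (n - p + 1) (dg n 1 x) (dg n 1 y)"
      by (rule dg_cmp[OF x gamG[OF gy] _ _ _ _ ce]) (use True in arith)+
    moreover have "Suc n - p = n - p + 1" using True by arith
    ultimately show ?thesis using Cc_lt[OF True] Cc_lt[of p "Suc n"] True by simp
  next
    case False
    then have "x = y" using eq_ge e by blast
    show ?thesis
    proof (cases "p = n")
      case True
      have "cmp (Suc n) 1 (degs1 dg n 1 x) (degs1 dg n 1 x) = degs1 dg n 1 x"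
        by (rule degs1_idem'[OF x]) simp_all
      then show ?thesis using Cc_lt[of p "Suc n"] Cc_ge[OF False] True \<open>x = y\<close> by simp
    next
      case False2: False
      then show ?thesis using False Cc_ge[OF False] Cc_ge[of p "Suc n"] \<open>x = y\<close> by simp
    qed
  qed
qed

end

theorem theorem3p8:
  fixes G :: "nat \<Rightarrow> 'a set"
    and fc :: "nat \<Rightarrow> nat \<Rightarrow> bool \<Rightarrow> 'a \<Rightarrow> 'a"
    and dg :: "nat \<Rightarrow> nat \<Rightarrow> 'a \<Rightarrow> 'a"
    and cn :: "nat \<Rightarrow> nat \<Rightarrow> bool \<Rightarrow> 'a \<Rightarrow> 'a"
    and cmp :: "nat \<Rightarrow> nat \<Rightarrow> 'a \<Rightarrow> 'a \<Rightarrow> 'a"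
  assumes "cubical_omega_cat_conn G fc dg cn cmp"
  shows "\<forall>n. omega_cat (Phi fc cn cmp n ` G n) (Phi_d fc dg n) (Phi_c cmp n)
           \<and> dg n 1 ` (Phi fc cn cmp n ` G n) \<subseteq> Phi fc cn cmp (Suc n) ` G (Suc n)
           \<and> omega_hom (Phi fc cn cmp n ` G n) (Phi_d fc dg n) (Phi_c cmp n)
                       (Phi fc cn cmp (Suc n) ` G (Suc n)) (Phi_d fc dg (Suc n)) (Phi_c cmp (Suc n))
                       (dg n 1)"
proof
  fix n
  interpret cub G fc dg cn cmp by (rule cub.intro[OF assms])
  show "omega_cat (Phi fc cn cmp n ` G n) (Phi_d fc dg n) (Phi_c cmp n)
           \<and> dg n 1 ` (Phi fc cn cmp n ` G n) \<subseteq> Phi fc cn cmp (Suc n) ` G (Suc n)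
           \<and> omega_hom (Phi fc cn cmp n ` G n) (Phi_d fc dg n) (Phi_c cmp n)
                       (Phi fc cn cmp (Suc n) ` G (Suc n)) (Phi_d fc dg (Suc n)) (Phi_c cmp (Suc n))
                       (dg n 1)"
    unfolding Phi_image using gam_omega gam_hom gam_dg1 by auto
qed

end
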